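(* Let $n\neq1$, $p\neq0$, $b\neq0$ (so equation (A) is multi-dimensional, hyperbolic and quasilinear). Consider the vector fields $\hat X_1=\partial_t$; $\hat X_2=t\partial_t+r\partial_r$; $\hat X_3=\tfrac12pbr\,\partial_r+(bu+pc)\partial_u$; $\hat X_4=(a+b+(1-p)c)r^{3-n}\partial_r+(2-n)r^{2-n}\big((b+(1-p)c)u+pc\big)\partial_u$; $\hat X_5=\tfrac12pbr\ln r\,\partial_r+(1+\ln r)(bu+pc)\partial_u$; $\hat X_6=t^2\partial_t+tu\partial_u$. Then the Lie algebra of point symmetries of (A) is spanned by $\hat X_1,\hat X_2$ together with: $\hat X_3$ iff $c(p-1)=0$; $\hat X_4$ iff $c(p-1)=0$, $n\neq2$ and $(a+b+(1-p)c)(n-3)=bp(n/2-1)$; $\hat X_5$ iff $c(p-1)=0$, $n=2$ and $a=-b$; $\hat X_6$ iff $c=0$ and $p=-4$. In particular, if $c\neq0$ and $p\neq1$ the algebra is 2-dimensional, spanned by $\hat X_1,\hat X_2$. Whenever the relevant generators are present, their commutators are $[\hat X_1,\hat X_2]=\hat X_1$, $[\hat X_1,\hat X_3]=[\hat X_2,\hat X_3]=0$, $[\hat X_1,\hat X_4]=0$, $[\hat X_2,\hat X_4]=(2-n)\hat X_4$, $[\hat X_3,\hat X_4]=p(1-n/2)b\,\hat X_4$, $[\hat X_1,\hat X_5]=0$, $[\hat X_2,\hat X_5]=\hat X_3$, $[\hat X_3,\hat X_5]=\tfrac{pb}{2}\hat X_3$, $[\hat X_1,\hat X_6]=2\hat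 X_2+\tfrac1b\hat X_3$, $[\hat X_2,\hat X_6]=\hat X_6$, $[\hat X_3,\hat X_6]=[\hat X_4,\hat X_6]=[\hat X_5,\hat X_6]=0$.
   Context: Equation (A) is $u_{tt}=(c+bu^{p})\big(u_{rr}+\frac{n-1}{r}u_{r}\big)+au^{p-1}u_{r}^{2}$ for $u(t,r)$, $r>0$, $u>0$, with real constants $a,b,c$, $p\neq0$ and real $n$. A point symmetry is a vector field $\hat X=\tau(t,r,u)\partial_t+\xi(t,r,u)\partial_r+\eta(t,r,u)\partial_u$ whose prolongation leaves the equation invariant; equivalently, $P=\eta-\tau u_t-\xi u_r$ satisfies the linearized (Fréchet derivative) equation of (A) on all solutions. Point symmetries form a Lie algebra under the vector field commutator $[\hat X,\hat Y]=\hat X\hat Y-\hat Y\hat X$. *)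

theory Defs
  imports "HOL-Analysis.Analysis"
begin

text \<open>Points (t, r, u) of the space of independent and dependent variables.
  A vector field tau d_t + xi d_r + eta d_u is represented by the map
  x \<mapsto> (tau x, xi x, eta x).\<close>

type_synonym pt = "real \<times> real \<times> real"
type_synonym vf = "pt \<Rightarrow> real \<times> real \<times> real"

definition Omega :: "pt set" where
  "Omega = {(t, r, u). 0 < r \<and> 0 < u}"

definition Dt :: "(pt \<Rightarrow> real) \<Rightarrow> pt \<Rightarrow> real" where
  "Dt f x = frechet_derivative f (at x) (1, 0, 0)"
definition Dr :: "(pt \<Rightarrow> real) \<Rightarrow> pt \<Rightarrow> real" where
  "Dr f x = frechet_derivative f (at x) (0, 1, 0)"
definition Du :: "(pt \<Rightarrow> real) \<Rightarrow> pt \<Rightarrow> real" where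
  "Du f x = frechet_derivative f (at x) (0, 0, 1)"

fun Ck :: "nat \<Rightarrow> pt set \<Rightarrow> (pt \<Rightarrow> real) \<Rightarrow> bool" where
  "Ck 0 S f = continuous_on S f"
| "Ck (Suc k) S f = ((\<forall>x\<in>S. f differentiable (at x)) \<and>
      Ck k S (Dt f) \<and> Ck k S (Dr f) \<and> Ck k S (Du f))"

definition smooth_on :: "pt set \<Rightarrow> (pt \<Rightarrow> real) \<Rightarrow> bool" where
  "smooth_on S f = (\<forall>k. Ck k S f)"

definition vt :: "vf \<Rightarrow> pt \<Rightarrow> real" where "vt X = (\<lambda>x. fst (X x))"
definition vr :: "vf \<Rightarrow> pt \<Rightarrow> real" where "vr X = (\<lambda>x. fst (snd (X x)))"
definition vu :: "vf \<Rightarrow> pt \<Rightarrow> real" where "vu X = (\<lambda>x. snd (snd (X x)))"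

definition act :: "vf \<Rightarrow> (pt \<Rightarrow> real) \<Rightarrow> pt \<Rightarrow> real" where
  "act X f x = vt X x * Dt f x + vr X x * Dr f x + vu X x * Du f x"

definition bracket :: "vf \<Rightarrow> vf \<Rightarrow> vf" where
  "bracket X Y x =
     (act X (vt Y) x - act Y (vt X) x,
      act X (vr Y) x - act Y (vr X) x,
      act X (vu Y) x - act Y (vu X) x)"

text \<open>Prolongation coefficients (standard formulas, Olver) at the jet point
  (x, u_t, u_r, u_tt, u_tr, u_rr), with x = (t, r, u).\<close>
definition eta_r :: "vf \<Rightarrow> pt \<Rightarrow> real \<Rightarrow> real \<Rightarrow> real" where
  "eta_r X x ut ur =
    (let \<tau> = vt X; \<xi> = vr X; \<eta> = vu X in
      Dr \<eta> x + ur * Du \<eta> x - ut * (Dr \<tau> x + ur * Du \<tau> x) - ur * (Dr \<xi> x + ur * Du \<xi> x))"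

definition eta_tt :: "vf \<Rightarrow> pt \<Rightarrow> real \<Rightarrow> real \<Rightarrow> real \<Rightarrow> real \<Rightarrow> real" where
  "eta_tt X x ut ur utt utr =
    (let \<tau> = vt X; \<xi> = vr X; \<eta> = vu X in
      Dt (Dt \<eta>) x + (2 * Dt (Du \<eta>) x - Dt (Dt \<tau>) x) * ut - Dt (Dt \<xi>) x * ur
      + (Du (Du \<eta>) x - 2 * Dt (Du \<tau>) x) * ut^2 - 2 * Dt (Du \<xi>) x * ut * ur
      - Du (Du \<tau>) x * ut^3 - Du (Du \<xi>) x * ut^2 * ur
      + (Du \<eta> x - 2 * Dt \<tau> x) * utt - 2 * Dt \<xi> x * utr
      - 3 * Du \<tau> x * ut * utt - Du \<xi> x * ur * utt - 2 * Du \<xi> x * ut * utr)"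

definition eta_rr :: "vf \<Rightarrow> pt \<Rightarrow> real \<Rightarrow> real \<Rightarrow> real \<Rightarrow> real \<Rightarrow> real" where
  "eta_rr X x ut ur utr urr =
    (let \<tau> = vt X; \<xi> = vr X; \<eta> = vu X in
      Dr (Dr \<eta>) x + (2 * Dr (Du \<eta>) x - Dr (Dr \<xi>) x) * ur - Dr (Dr \<tau>) x * ut
      + (Du (Du \<eta>) x - 2 * Dr (Du \<xi>) x) * ur^2 - 2 * Dr (Du \<tau>) x * ur * ut
      - Du (Du \<xi>) x * ur^3 - Du (Du \<tau>) x * ur^2 * ut
      + (Du \<eta> x - 2 * Dr \<xi> x) * urr - 2 * Dr \<tau> x * utr
      - 3 * Du \<xi> x * ur * urr - Du \<tau> x * ut * urr - 2 * Du \<tau> x * ur * utr)"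

definition DeltaA :: "real \<Rightarrow> real \<Rightarrow> real \<Rightarrow> real \<Rightarrow> real \<Rightarrow> real \<Rightarrow> real \<Rightarrow> real \<Rightarrow> real \<Rightarrow> real \<Rightarrow> real" where
  "DeltaA a b c p n r u ur utt urr =
     utt - (c + b * u powr p) * (urr + (n - 1) / r * ur) - a * u powr (p - 1) * ur^2"

text \<open>pr^(2) X applied to Delta:  xi Delta_r + eta Delta_u + eta^r Delta_{u_r}
  + eta^tt Delta_{u_tt} + eta^rr Delta_{u_rr}  (the other partials of Delta vanish).\<close>
definition prX_DeltaA :: "real \<Rightarrow> real \<Rightarrow> real \<Rightarrow> real \<Rightarrow> real \<Rightarrow> vf \<Rightarrow> pt \<Rightarrow>
    real \<Rightarrow> real \<Rightarrow> real \<Rightarrow> real \<Rightarrow> real \<Rightarrow> real" where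
  "prX_DeltaA a b c p n X x ut ur utt utr urr =
    (let r = fst (snd x); u = snd (snd x) in
      vr X x * ((c + b * u powr p) * (n - 1) / r^2 * ur)
      + vu X x * (- b * p * u powr (p - 1) * (urr + (n - 1) / r * ur)
                  - a * (p - 1) * u powr (p - 2) * ur^2)
      + eta_r X x ut ur * (- (c + b * u powr p) * (n - 1) / r - 2 * a * u powr (p - 1) * ur)
      + eta_tt X x ut ur utt utr
      - (c + b * u powr p) * eta_rr X x ut ur utr urr)"

definition is_point_symmetry :: "real \<Rightarrow> real \<Rightarrow> real \<Rightarrow> real \<Rightarrow> real \<Rightarrow> vf \<Rightarrow> bool" where
  "is_point_symmetry a b c p n X \<longleftrightarrow>
     smooth_on Omega (vt X) \<and> smooth_on Omega (vr X) \<and> smooth_on Omega (vu X) \<and>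
     (\<forall>t r u ut ur utt utr urr. 0 < r \<longrightarrow> 0 < u \<longrightarrow>
        DeltaA a b c p n r u ur utt urr = 0 \<longrightarrow>
        prX_DeltaA a b c p n X (t, r, u) ut ur utt utr urr = 0)"

definition X1 :: vf where "X1 = (\<lambda>(t, r, u). (1, 0, 0))"
definition X2 :: vf where "X2 = (\<lambda>(t, r, u). (t, r, 0))"
definition X3 :: "real \<Rightarrow> real \<Rightarrow> real \<Rightarrow> vf" where
  "X3 b c p = (\<lambda>(t, r, u). (0, p * b * r / 2, b * u + p * c))"
definition X4 :: "real \<Rightarrow> real \<Rightarrow> real \<Rightarrow> real \<Rightarrow> real \<Rightarrow> vf" where
  "X4 a b c p n = (\<lambda>(t, r, u). (0, (a + b + (1 - p) * c) * r powr (3 - n),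
      (2 - n) * r powr (2 - n) * ((b + (1 - p) * c) * u + p * c)))"
definition X5 :: "real \<Rightarrow> real \<Rightarrow> real \<Rightarrow> vf" where
  "X5 b c p = (\<lambda>(t, r, u). (0, p * b * r * ln r / 2, (1 + ln r) * (b * u + p * c)))"
definition X6 :: vf where "X6 = (\<lambda>(t, r, u). (t^2, 0, t * u))"

definition cond3 :: "real \<Rightarrow> real \<Rightarrow> bool" where
  "cond3 c p \<longleftrightarrow> c * (p - 1) = 0"
definition cond4 :: "real \<Rightarrow> real \<Rightarrow> real \<Rightarrow> real \<Rightarrow> real \<Rightarrow> bool" where
  "cond4 a b c p n \<longleftrightarrow> c * (p - 1) = 0 \<and> n \<noteq> 2 \<and>
      (a + b + (1 - p) * c) * (n - 3) = b * p * (n / 2 - 1)"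
definition cond5 :: "real \<Rightarrow> real \<Rightarrow> real \<Rightarrow> real \<Rightarrow> real \<Rightarrow> bool" where
  "cond5 a b c p n \<longleftrightarrow> c * (p - 1) = 0 \<and> n = 2 \<and> a = - b"
definition cond6 :: "real \<Rightarrow> real \<Rightarrow> bool" where
  "cond6 c p \<longleftrightarrow> c = 0 \<and> p = - 4"

end

theory Submission
  imports Defs
begin


lemma open_Omega: "open Omega"
proof -
  have "Omega = {x. 0 < fst (snd x)} \<inter> {x. 0 < snd (snd x)}"
    unfolding Omega_def by auto
  also have "open \<dots>"
    by (intro open_Int open_Collect_less continuous_intros)
  finally show ?thesis .
qed

lemma Omega_iff[simp]: "((t,r,u) \<in> Omega) = (0 < r \<and> 0 < u)"
  unfolding Omega_def by auto

lemma loc_fd: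
  assumes "open S" "x \<in> S" "\<forall>y\<in>S. f y = g y"
  shows "frechet_derivative f (at x) = frechet_derivative g (at x)"
proof -
  have "\<And>f'. (f has_derivative f') (at x) = (g has_derivative f') (at x)"
    using has_derivative_transform_within_open[of f _ x UNIV S g]
          has_derivative_transform_within_open[of g _ x UNIV S f] assms by auto
  then show ?thesis unfolding frechet_derivative_def by simp
qed

lemma locD:
  assumes "x \<in> Omega" "\<forall>y\<in>Omega. f y = g y"
  shows "Dt f x = Dt g x" "Dr f x = Dr g x" "Du f x = Du g x"
  using loc_fd[OF open_Omega assms] unfolding Dt_def Dr_def Du_def by auto

lemma loc_diff:
  assumes "x \<in> Omega" "\<forall>y\<in>Omega. f y = g y" "f differentiable (at x)"
  shows "g differentiable (at x)"
  using assms has_derivative_transform_within_open[OF _ open_Omega, of f _ x UNIV g]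
  unfolding differentiable_def by blast

lemma Dfrom:
  assumes "(f has_derivative f') (at x)"
  shows "Dt f x = f' (1,0,0)" "Dr f x = f' (0,1,0)" "Du f x = f' (0,0,1)"
  using frechet_derivative_at[OF assms] unfolding Dt_def Dr_def Du_def by auto

lemma Ck_cong:
  "Ck k Omega f \<Longrightarrow> \<forall>y\<in>Omega. f y = g y \<Longrightarrow> Ck k Omega g"
proof (induction k arbitrary: f g)
  case 0
  then show ?case by (metis Ck.simps(1) continuous_on_cong)
next
  case (Suc k)
  have d: "\<forall>x\<in>Omega. g differentiable (at x)"
    using Suc.prems loc_diff[of _ f g] by simp
  have e: "\<forall>y\<in>Omega. Dt f y = Dt g y" "\<forall>y\<in>Omega. Dr f y = Dr g y" "\<forall>y\<in>Omega. Du f y = Du g y"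
    using locD Suc.prems(2) by blast+
  have "Ck k Omega (Dt f)" "Ck k Omega (Dr f)" "Ck k Omega (Du f)" using Suc.prems(1) by simp_all
  then have "Ck k Omega (Dt g)" "Ck k Omega (Dr g)" "Ck k Omega (Du g)" using Suc.IH e by blast+
  then show ?case using d by simp
qed

inductive sm :: "(pt \<Rightarrow> real) \<Rightarrow> bool" where
  sm_const: "sm (\<lambda>x. k)"
| sm_t: "sm (\<lambda>x. fst x)"
| sm_r: "sm (\<lambda>x. fst (snd x))"
| sm_u: "sm (\<lambda>x. snd (snd x))"
| sm_add: "sm f \<Longrightarrow> sm g \<Longrightarrow> sm (\<lambda>x. f x + g x)"
| sm_mult: "sm f \<Longrightarrow> sm g \<Longrightarrow> sm (\<lambda>x. f x * g x)"
| sm_rpow: "sm (\<lambda>x. fst (snd x) powr s)"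
| sm_ln: "sm (\<lambda>x. ln (fst (snd x)))"
| sm_cong: "sm f \<Longrightarrow> \<forall>x\<in>Omega. f x = g x \<Longrightarrow> sm g"

lemma sm_concl:
  assumes "\<forall>x\<in>Omega. f differentiable (at x)" "sm a" "sm b" "sm c"
    "\<forall>x\<in>Omega. a x = Dt f x" "\<forall>x\<in>Omega. b x = Dr f x" "\<forall>x\<in>Omega. c x = Du f x"
  shows "(\<forall>x\<in>Omega. f differentiable (at x)) \<and> sm (Dt f) \<and> sm (Dr f) \<and> sm (Du f)"
  using assms(1) sm_cong[OF assms(2) assms(5)] sm_cong[OF assms(3) assms(6)] sm_cong[OF assms(4) assms(7)]
  by blast

lemma sm_concl':
  assumes "\<And>x. x \<in> Omega \<Longrightarrow> (f has_derivative F x) (at x)" "sm a" "sm b" "sm c"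
    "\<And>x. x\<in>Omega \<Longrightarrow> a x = F x (1,0,0)" "\<And>x. x\<in>Omega \<Longrightarrow> b x = F x (0,1,0)"
    "\<And>x. x\<in>Omega \<Longrightarrow> c x = F x (0,0,1)"
  shows "(\<forall>x\<in>Omega. f differentiable (at x)) \<and> sm (Dt f) \<and> sm (Dr f) \<and> sm (Du f)"
proof (rule sm_concl[OF _ assms(2-4)])
  show "\<forall>x\<in>Omega. f differentiable at x" using assms(1) differentiableI by blast
  show "\<forall>x\<in>Omega. a x = Dt f x" using assms(1,5) Dfrom(1) by metis
  show "\<forall>x\<in>Omega. b x = Dr f x" using assms(1,6) Dfrom(2) by metis
  show "\<forall>x\<in>Omega. c x = Du f x" using assms(1,7) Dfrom(3) by metis
qed

lemma sm_D:
  "sm f \<Longrightarrow> (\<forall>x\<in>Omega. f differentiable (at x)) \<and> sm (Dt f) \<and> sm (Dr f) \<and> sm (Du f)"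
proof (induction rule: sm.induct)
  case (sm_const k)
  show ?case
    by (rule sm_concl'[where F="\<lambda>x h. 0", OF _ sm.sm_const sm.sm_const sm.sm_const]) auto
next
  case sm_t
  show ?case
    by (rule sm_concl'[where F="\<lambda>x h. fst h", OF _ sm.sm_const sm.sm_const sm.sm_const])
      (auto intro!: derivative_eq_intros)
next
  case sm_r
  show ?case
    by (rule sm_concl'[where F="\<lambda>x h. fst (snd h)", OF _ sm.sm_const sm.sm_const sm.sm_const])
      (auto intro!: derivative_eq_intros)
next
  case sm_u
  show ?case
    by (rule sm_concl'[where F="\<lambda>x h. snd (snd h)", OF _ sm.sm_const sm.sm_const sm.sm_const])
      (auto intro!: derivative_eq_intros)
next
  case (sm_add f g)
  show ?case
  proof (rule sm_concl'[where F="\<lambda>x h. frechet_derivative f (at x) h + frechet_derivative g (at x) h"])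
    show "sm (\<lambda>x. Dt f x + Dt g x)" "sm (\<lambda>x. Dr f x + Dr g x)" "sm (\<lambda>x. Du f x + Du g x)"
      using sm_add.IH by (auto intro!: sm.sm_add)
    show "((\<lambda>x. f x + g x) has_derivative
        (\<lambda>h. frechet_derivative f (at x) h + frechet_derivative g (at x) h)) (at x)"
      if x: "x \<in> Omega" for x
      using x sm_add.IH by (intro has_derivative_add frechet_derivative_works[THEN iffD1]) auto
  qed (auto simp: Dt_def Dr_def Du_def)
next
  case (sm_mult f g)
  show ?case
  proof (rule sm_concl'[where F="\<lambda>x h. f x * frechet_derivative g (at x) h + frechet_derivative f (at x) h * g x"])
    show "sm (\<lambda>x. f x * Dt g x + Dt f x * g x)" "sm (\<lambda>x. f x * Dr g x + Dr f x * g x)"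
      "sm (\<lambda>x. f x * Du g x + Du f x * g x)"
      using sm_mult.IH sm_mult.hyps by (auto intro!: sm.sm_add sm.sm_mult)
    show "((\<lambda>x. f x * g x) has_derivative
        (\<lambda>h. f x * frechet_derivative g (at x) h + frechet_derivative f (at x) h * g x)) (at x)"
      if x: "x \<in> Omega" for x
      using x sm_mult.IH by (intro has_derivative_mult frechet_derivative_works[THEN iffD1]) auto
  qed (auto simp: Dt_def Dr_def Du_def)
next
  case (sm_rpow s)
  show ?case
  proof (rule sm_concl'[where F="\<lambda>x h. fst (snd h) * (s * fst (snd x) powr (s - 1))", OF _ sm.sm_const _ sm.sm_const])
    show "sm (\<lambda>x. s * fst (snd x) powr (s - 1))"
      by (intro sm.sm_mult sm.sm_const sm.sm_rpow)
    show "((\<lambda>x::pt. fst (snd x) powr s) has_derivative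
        (\<lambda>h. fst (snd h) * (s * fst (snd x) powr (s - 1)))) (at x)"
      if x: "x \<in> Omega" for x
    proof -
      have "0 < fst (snd x)" using x unfolding Omega_def by auto
      then show ?thesis
        by (intro DERIV_compose_FDERIV[OF has_real_derivative_powr] derivative_eq_intros) auto
    qed
  qed auto
next
  case sm_ln
  show ?case
  proof (rule sm_concl'[where F="\<lambda>x h. fst (snd h) * (1 / fst (snd x))", OF _ sm.sm_const _ sm.sm_const])
    show "sm (\<lambda>x. fst (snd x) powr (-1))" by (rule sm.sm_rpow)
    show "((\<lambda>x::pt. ln (fst (snd x))) has_derivative
        (\<lambda>h. fst (snd h) * (1 / fst (snd x)))) (at x)"
      if x: "x \<in> Omega" for x
    proof -
      have "0 < fst (snd x)" using x unfolding Omega_def by auto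
      then show ?thesis
        by (intro DERIV_compose_FDERIV[OF DERIV_ln_divide] derivative_eq_intros) auto
    qed
    show "fst (snd x) powr (-1) = fst (snd (0::real,1::real,0::real)) * (1 / fst (snd x))" if "x \<in> Omega" for x
      using that unfolding Omega_def by (auto simp: powr_minus_divide)
  qed auto
next
  case (sm_cong f g)
  show ?case
  proof (rule sm_concl[of g "Dt f" "Dr f" "Du f"])
    show "\<forall>x\<in>Omega. g differentiable at x" using sm_cong loc_diff by blast
  qed (use sm_cong locD in auto)
qed

lemma sm_Ck: "sm f \<Longrightarrow> Ck k Omega f"
proof (induction k arbitrary: f)
  case 0
  then show ?case using sm_D[OF 0]
    by (auto intro!: differentiable_imp_continuous_within continuous_at_imp_continuous_on)
next
  case (Suc k)
  then show ?case using sm_D[OF Suc.prems] by auto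
qed

lemma sm_smooth: "sm f \<Longrightarrow> smooth_on Omega f"
  unfolding smooth_on_def using sm_Ck by auto


lemma smooth_diff: "smooth_on Omega f \<Longrightarrow> x \<in> Omega \<Longrightarrow> f differentiable (at x)"
  unfolding smooth_on_def by (metis Ck.simps(2))

lemma smooth_D: assumes "smooth_on Omega f"
  shows "smooth_on Omega (Dt f)" "smooth_on Omega (Dr f)" "smooth_on Omega (Du f)"
  using assms unfolding smooth_on_def by (metis Ck.simps(2))+

lemma smooth_cont: "smooth_on Omega f \<Longrightarrow> continuous_on Omega f"
  unfolding smooth_on_def by (metis Ck.simps(1))

lemma chainD:
  assumes "f differentiable (at (P x))" "(P has_derivative P') (at x)"
  shows "Dt (\<lambda>y. f (P y)) x = frechet_derivative f (at (P x)) (P' (1,0,0))"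
    "Dr (\<lambda>y. f (P y)) x = frechet_derivative f (at (P x)) (P' (0,1,0))"
    "Du (\<lambda>y. f (P y)) x = frechet_derivative f (at (P x)) (P' (0,0,1))"
proof -
  have "((\<lambda>y. f (P y)) has_derivative (\<lambda>h. frechet_derivative f (at (P x)) (P' h))) (at x)"
    using diff_chain_at[OF assms(2) assms(1)[unfolded frechet_derivative_works]]
    by (simp add: o_def)
  then show "Dt (\<lambda>y. f (P y)) x = frechet_derivative f (at (P x)) (P' (1,0,0))"
    "Dr (\<lambda>y. f (P y)) x = frechet_derivative f (at (P x)) (P' (0,1,0))"
    "Du (\<lambda>y. f (P y)) x = frechet_derivative f (at (P x)) (P' (0,0,1))"
    using Dfrom by auto
qed

lemma restr_deriv:
  assumes "f differentiable (at (P s))" "(P has_derivative (\<lambda>h. h *\<^sub>R v)) (at s)"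
  shows "((\<lambda>s. f (P s)) has_real_derivative frechet_derivative f (at (P s)) v) (at s)"
proof -
  have bl: "bounded_linear (frechet_derivative f (at (P s)))"
    using assms(1) frechet_derivative_works has_derivative_bounded_linear by blast
  have "((\<lambda>s. f (P s)) has_derivative (\<lambda>h. frechet_derivative f (at (P s)) (h *\<^sub>R v))) (at s)"
    using diff_chain_at[OF assms(2) assms(1)[unfolded frechet_derivative_works]]
    by (simp add: o_def)
  also have "(\<lambda>h. frechet_derivative f (at (P s)) (h *\<^sub>R v)) = (*) (frechet_derivative f (at (P s)) v)"
    using linear_simps(5)[OF bl] by (auto simp: mult.commute)
  finally show ?thesis unfolding has_field_derivative_def .
qed

lemma L1t: "f differentiable (at (t,r,u)) \<Longrightarrow> ((\<lambda>s. f (s,r,u)) has_real_derivative Dt f (t,r,u)) (at t)"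
  unfolding Dt_def
  by (rule restr_deriv[where P="\<lambda>s. (s,r,u)", simplified]) (auto intro!: derivative_eq_intros simp: zero_prod_def)

lemma L1r: "f differentiable (at (t,r,u)) \<Longrightarrow> ((\<lambda>s. f (t,s,u)) has_real_derivative Dr f (t,r,u)) (at r)"
  unfolding Dr_def
  by (rule restr_deriv[where P="\<lambda>s. (t,s,u)", simplified]) (auto intro!: derivative_eq_intros simp: zero_prod_def)

lemma L1u: "f differentiable (at (t,r,u)) \<Longrightarrow> ((\<lambda>s. f (t,r,s)) has_real_derivative Du f (t,r,u)) (at u)"
  unfolding Du_def
  by (rule restr_deriv[where P="\<lambda>s. (t,r,s)", simplified]) (auto intro!: derivative_eq_intros simp: zero_prod_def)

lemma pos_const:
  assumes "\<And>s. 0 < s \<Longrightarrow> (f has_real_derivative 0) (at s)" "0 < x" "0 < y"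
  shows "f x = f y"
  by (rule DERIV_isconst3[of 0 "max x y + 1"]) (use assms in auto)

lemma zero_D:
  assumes "\<forall>y\<in>Omega. g y = 0" "x \<in> Omega"
  shows "Dt g x = 0" "Dr g x = 0" "Du g x = 0"
proof -
  have h: "((\<lambda>y::pt. 0::real) has_derivative (\<lambda>h. 0)) (at x)" by (rule has_derivative_const)
  show "Dt g x = 0" "Dr g x = 0" "Du g x = 0"
    using locD[OF assms(2), of "\<lambda>y. 0" g] assms(1) Dfrom[OF h] by auto
qed


lemma REP_t:
  assumes "\<forall>y\<in>Omega. f y = T0 (fst y)" "\<And>s. (T0 has_real_derivative T1 s) (at s)" "x \<in> Omega"
  shows "Dt f x = T1 (fst x)" "Dr f x = 0" "Du f x = 0"
proof -
  have h: "((\<lambda>y. T0 (fst y)) has_derivative (\<lambda>h. fst h * T1 (fst x))) (at x)"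
    by (rule DERIV_compose_FDERIV[OF assms(2)]) (auto intro!: derivative_eq_intros)
  show "Dt f x = T1 (fst x)" "Dr f x = 0" "Du f x = 0"
    using locD[OF assms(3), of "\<lambda>y. T0 (fst y)" f] assms(1) Dfrom[OF h] by auto
qed

lemma REP_r:
  assumes "\<forall>y\<in>Omega. f y = Q0 (fst (snd y))" "\<And>s. 0 < s \<Longrightarrow> (Q0 has_real_derivative Q1 s) (at s)" "x \<in> Omega"
  shows "Dt f x = 0" "Dr f x = Q1 (fst (snd x))" "Du f x = 0"
proof -
  have "0 < fst (snd x)" using assms(3) unfolding Omega_def by auto
  then have h: "((\<lambda>y. Q0 (fst (snd y))) has_derivative (\<lambda>h. fst (snd h) * Q1 (fst (snd x)))) (at x)"
    by (intro DERIV_compose_FDERIV[OF assms(2)]) (auto intro!: derivative_eq_intros)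
  show "Dt f x = 0" "Dr f x = Q1 (fst (snd x))" "Du f x = 0"
    using locD[OF assms(3), of "\<lambda>y. Q0 (fst (snd y))" f] assms(1) Dfrom[OF h] by auto
qed

lemma REP_e:
  assumes "\<forall>y\<in>Omega. f y = (A (fst (snd y)) - B (fst y)) * H (snd (snd y))"
    "\<And>s. 0 < s \<Longrightarrow> (A has_real_derivative A' s) (at s)"
    "\<And>s. (B has_real_derivative B' s) (at s)"
    "\<And>s. 0 < s \<Longrightarrow> (H has_real_derivative H' s) (at s)" "x \<in> Omega"
  shows "Dt f x = (0 - B' (fst x)) * H (snd (snd x))"
    "Dr f x = (A' (fst (snd x)) - 0) * H (snd (snd x))"
    "Du f x = (A (fst (snd x)) - B (fst x)) * H' (snd (snd x))"
proof -
  have p: "0 < fst (snd x)" "0 < snd (snd x)" using assms(5) unfolding Omega_def by auto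
  have h: "((\<lambda>y. (A (fst (snd y)) - B (fst y)) * H (snd (snd y))) has_derivative
     (\<lambda>h. (A (fst (snd x)) - B (fst x)) * (snd (snd h) * H' (snd (snd x))) +
          (fst (snd h) * A' (fst (snd x)) - fst h * B' (fst x)) * H (snd (snd x)))) (at x)"
    by (intro has_derivative_mult has_derivative_diff DERIV_compose_FDERIV[OF assms(2)]
        DERIV_compose_FDERIV[OF assms(3)] DERIV_compose_FDERIV[OF assms(4)])
       (use p in \<open>auto intro!: derivative_eq_intros\<close>)
  show "Dt f x = (0 - B' (fst x)) * H (snd (snd x))"
    "Dr f x = (A' (fst (snd x)) - 0) * H (snd (snd x))"
    "Du f x = (A (fst (snd x)) - B (fst x)) * H' (snd (snd x))"
    using locD[OF assms(5), of "\<lambda>y. (A (fst (snd y)) - B (fst y)) * H (snd (snd y))" f] assms(1) Dfrom[OF h]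
    by auto
qed


definition PP where
 "PP a b c p n X t r u ut ur utr urr =
   prX_DeltaA a b c p n X (t,r,u) ut ur
     ((c + b * u powr p) * (urr + (n - 1) / r * ur) + a * u powr (p - 1) * ur^2) utr urr"

lemma N1: "PP a b c p n X t r u 1 0 1 0 - PP a b c p n X t r u 1 0 0 0
   - PP a b c p n X t r u 0 0 1 0 + PP a b c p n X t r u 0 0 0 0 = -2 * Du (vr X) (t,r,u)"
  unfolding PP_def prX_DeltaA_def eta_r_def eta_tt_def eta_rr_def Let_def
  by (simp add: algebra_simps)

lemma N2: "PP a b c p n X t r u 0 1 1 0 - PP a b c p n X t r u 0 1 0 0
   - PP a b c p n X t r u 0 0 1 0 + PP a b c p n X t r u 0 0 0 0 = 2 * (c + b * u powr p) * Du (vt X) (t,r,u)"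
  unfolding PP_def prX_DeltaA_def eta_r_def eta_tt_def eta_rr_def Let_def
  by (simp add: algebra_simps)

lemma N3: "PP a b c p n X t r u 0 0 1 0 - PP a b c p n X t r u 0 0 0 0
   = -2 * Dt (vr X) (t,r,u) + 2 * (c + b * u powr p) * Dr (vt X) (t,r,u)"
  unfolding PP_def prX_DeltaA_def eta_r_def eta_tt_def eta_rr_def Let_def
  by (simp add: algebra_simps)

lemma expand2:
  fixes X :: vf and a b c p n t r u F G :: real and x :: pt
  assumes hF: "F = c + b * u powr p" and hG: "G = a * u powr (p - 1)" and hx: "x = (t,r,u)" and hr: "r \<noteq> 0"
  assumes z: "Du (vr X) x = 0" "Du (vt X) x = 0" "Dr (vt X) x = 0" "Dt (vr X) x = 0"
    "Du (Du (vt X)) x = 0" "Dt (Du (vt X)) x = 0" "Dr (Du (vt X)) x = 0"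
    "Du (Du (vr X)) x = 0" "Dt (Du (vr X)) x = 0" "Dr (Du (vr X)) x = 0"
    "Dr (Dr (vt X)) x = 0" "Dt (Dt (vr X)) x = 0"
  shows "PP a b c p n X t r u ut ur utr urr =
    (Dt (Dt (vu X)) x - F * Dr (Dr (vu X)) x - (n - 1) / r * F * Dr (vu X) x)
    + (2 * Dt (Du (vu X)) x - Dt (Dt (vt X)) x) * ut
    + Du (Du (vu X)) x * ut^2
    + ((Du (vu X) x - 2 * Dt (vt X) x) * F * (n - 1) / r - F * (2 * Dr (Du (vu X)) x - Dr (Dr (vr X)) x)
       - b * p * u powr (p - 1) * (n - 1) / r * vu X x + vr X x * F * (n - 1) / r^2
       - (Du (vu X) x - Dr (vr X) x) * F * (n - 1) / r - 2 * G * Dr (vu X) x) * ur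
    + ((Du (vu X) x - 2 * Dt (vt X) x) * G - F * Du (Du (vu X)) x - a * (p - 1) * u powr (p - 2) * vu X x
       - 2 * G * (Du (vu X) x - Dr (vr X) x)) * ur^2
    + (2 * F * (Dr (vr X) x - Dt (vt X) x) - b * p * u powr (p - 1) * vu X x) * urr"
  using z hr unfolding PP_def prX_DeltaA_def eta_r_def eta_tt_def eta_rr_def Let_def hF hG hx
  by (simp add: field_simps power2_eq_square)


lemma derivs:
  fixes X :: vf
  assumes hT: "\<forall>y\<in>Omega. vt X y = T0 (fst y)"
    and T01: "\<And>s. (T0 has_real_derivative T1 s) (at s)"
    and T12: "\<And>s. (T1 has_real_derivative T2 s) (at s)"
    and T23: "\<And>s. (T2 has_real_derivative T3 s) (at s)"
    and hQ: "\<forall>y\<in>Omega. vr X y = Q0 (fst (snd y))"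
    and Q01: "\<And>s. 0 < s \<Longrightarrow> (Q0 has_real_derivative Q1 s) (at s)"
    and Q12: "\<And>s. 0 < s \<Longrightarrow> (Q1 has_real_derivative Q2 s) (at s)"
    and Q23: "\<And>s. 0 < s \<Longrightarrow> (Q2 has_real_derivative Q3 s) (at s)"
    and hE: "\<forall>y\<in>Omega. vu X y = (Q1 (fst (snd y)) - T1 (fst y)) * hh (snd (snd y))"
    and h01: "\<And>s. 0 < s \<Longrightarrow> (hh has_real_derivative hh1 s) (at s)"
    and h12: "\<And>s. 0 < s \<Longrightarrow> (hh1 has_real_derivative hh2 s) (at s)"
    and x: "0 < r" "0 < u"
  shows "PP a b c p n X t r u ut ur utr urr =
    (- T3 t * hh u - (c + b * u powr p) * Q3 r * hh u - (n - 1) / r * (c + b * u powr p) * Q2 r * hh u)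
    + (2 * (- T2 t * hh1 u) - T2 t) * ut
    + (Q1 r - T1 t) * hh2 u * ut^2
    + (((Q1 r - T1 t) * hh1 u - 2 * T1 t) * (c + b * u powr p) * (n - 1) / r
       - (c + b * u powr p) * (2 * Q2 r * hh1 u - Q2 r)
       - b * p * u powr (p - 1) * (n - 1) / r * ((Q1 r - T1 t) * hh u) + Q0 r * (c + b * u powr p) * (n - 1) / r^2
       - ((Q1 r - T1 t) * hh1 u - Q1 r) * (c + b * u powr p) * (n - 1) / r
       - 2 * (a * u powr (p - 1)) * (Q2 r * hh u)) * ur
    + (((Q1 r - T1 t) * hh1 u - 2 * T1 t) * (a * u powr (p - 1)) - (c + b * u powr p) * ((Q1 r - T1 t) * hh2 u)
       - a * (p - 1) * u powr (p - 2) * ((Q1 r - T1 t) * hh u)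
       - 2 * (a * u powr (p - 1)) * ((Q1 r - T1 t) * hh1 u - Q1 r)) * ur^2
    + (2 * (c + b * u powr p) * (Q1 r - T1 t) - b * p * u powr (p - 1) * ((Q1 r - T1 t) * hh u)) * urr"
proof -
  define x where "x = (t,r,u)"
  have xO: "x \<in> Omega" using x unfolding x_def by simp
  have tT: "Dt (vt X) y = T1 (fst y)" "Dr (vt X) y = 0" "Du (vt X) y = 0" if "y \<in> Omega" for y
    using REP_t[of "vt X" T0 T1 y] hT T01 that by auto
  have tQ: "Dt (vr X) y = 0" "Dr (vr X) y = Q1 (fst (snd y))" "Du (vr X) y = 0" if "y \<in> Omega" for y
    using REP_r[of "vr X" Q0 Q1 y] hQ Q01 that by auto
  have dT: "\<forall>y\<in>Omega. Dt (vt X) y = T1 (fst y)" using tT by auto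
  have uT: "\<forall>y\<in>Omega. Du (vt X) y = 0" using tT by auto
  have rT: "\<forall>y\<in>Omega. Dr (vt X) y = 0" using tT by auto
  have rQ: "\<forall>y\<in>Omega. Dr (vr X) y = Q1 (fst (snd y))" using tQ by auto
  have uQ: "\<forall>y\<in>Omega. Du (vr X) y = 0" using tQ by auto
  have tQ0: "\<forall>y\<in>Omega. Dt (vr X) y = 0" using tQ by auto
  have eE: "Dt (vu X) y = (0 - T2 (fst y)) * hh (snd (snd y))"
    "Dr (vu X) y = (Q2 (fst (snd y)) - 0) * hh (snd (snd y))"
    "Du (vu X) y = (Q1 (fst (snd y)) - T1 (fst y)) * hh1 (snd (snd y))" if "y \<in> Omega" for y
    using REP_e[of "vu X" Q1 T1 hh Q2 T2 hh1 y] hE Q12 T12 h01 that by auto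
  have tE: "\<forall>y\<in>Omega. Dt (vu X) y = ((\<lambda>_. 0) (fst (snd y)) - T2 (fst y)) * hh (snd (snd y))"
    using eE by auto
  have rE: "\<forall>y\<in>Omega. Dr (vu X) y = (Q2 (fst (snd y)) - (\<lambda>_. 0) (fst y)) * hh (snd (snd y))"
    using eE by auto
  have uE: "\<forall>y\<in>Omega. Du (vu X) y = (Q1 (fst (snd y)) - T1 (fst y)) * hh1 (snd (snd y))"
    using eE by auto
  have ttE: "Dt (Dt (vu X)) x = (0 - T3 (fst x)) * hh (snd (snd x))"
    using REP_e[of "Dt (vu X)" "\<lambda>_. 0" T2 hh "\<lambda>_. 0" T3 hh1 x] tE T23 h01 xO by auto
  have uuE: "Dt (Du (vu X)) x = (0 - T2 (fst x)) * hh1 (snd (snd x))"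
    "Dr (Du (vu X)) x = (Q2 (fst (snd x)) - 0) * hh1 (snd (snd x))"
    "Du (Du (vu X)) x = (Q1 (fst (snd x)) - T1 (fst x)) * hh2 (snd (snd x))"
    using REP_e[of "Du (vu X)" Q1 T1 hh1 Q2 T2 hh2 x] uE Q12 T12 h12 xO by auto
  have rrE: "Dr (Dr (vu X)) x = (Q3 (fst (snd x)) - 0) * hh (snd (snd x))"
    using REP_e[of "Dr (vu X)" Q2 "\<lambda>_. 0" hh Q3 "\<lambda>_. 0" hh1 x] rE Q23 h01 xO by auto
  have z: "Du (vr X) x = 0" "Du (vt X) x = 0" "Dr (vt X) x = 0" "Dt (vr X) x = 0"
    "Du (Du (vt X)) x = 0" "Dt (Du (vt X)) x = 0" "Dr (Du (vt X)) x = 0"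
    "Du (Du (vr X)) x = 0" "Dt (Du (vr X)) x = 0" "Dr (Du (vr X)) x = 0"
    "Dr (Dr (vt X)) x = 0" "Dt (Dt (vr X)) x = 0"
    using zero_D[OF uT xO] zero_D[OF rT xO] zero_D[OF uQ xO] zero_D[OF tQ0 xO] tT[OF xO] tQ[OF xO] by auto
  have v: "Dt (vt X) x = T1 t" "Dt (Dt (vt X)) x = T2 t" "Dr (vr X) x = Q1 r" "Dr (Dr (vr X)) x = Q2 r"
    "vt X x = T0 t" "vr X x = Q0 r" "vu X x = (Q1 r - T1 t) * hh u"
    using tT[OF xO] REP_t[of "Dt (vt X)" T1 T2 x] REP_r[of "Dr (vr X)" Q1 Q2 x] dT T12 rQ Q12 hT hQ hE xO unfolding x_def by auto
  have w: "Dt (Dt (vu X)) x = - T3 t * hh u" "Dr (Dr (vu X)) x = Q3 r * hh u"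
    "Dr (vu X) x = Q2 r * hh u" "Du (vu X) x = (Q1 r - T1 t) * hh1 u"
    "Dt (Du (vu X)) x = - T2 t * hh1 u" "Du (Du (vu X)) x = (Q1 r - T1 t) * hh2 u"
    "Dr (Du (vu X)) x = Q2 r * hh1 u"
    using ttE rrE uuE eE[OF xO] unfolding x_def by auto
  show ?thesis
    using expand2[OF refl refl x_def _ z, of a b c p n ut ur utr urr] x
    unfolding v w by (simp add: field_simps)
qed


lemma pre_expand:
  fixes X :: vf
  assumes hT: "\<forall>y\<in>Omega. vt X y = T0 (fst y)"
    and T01: "\<And>s. (T0 has_real_derivative T1 s) (at s)"
    and T12: "\<And>s. (T1 has_real_derivative T2 s) (at s)"
    and hQ: "\<forall>y\<in>Omega. vr X y = Q0 (fst (snd y))"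
    and Q01: "\<And>s. 0 < s \<Longrightarrow> (Q0 has_real_derivative Q1 s) (at s)"
    and Q12: "\<And>s. 0 < s \<Longrightarrow> (Q1 has_real_derivative Q2 s) (at s)"
    and x: "0 < r" "0 < u"
  shows "PP a b c p n X t r u ut ur utr urr =
    (Dt (Dt (vu X)) (t,r,u) - (c + b * u powr p) * Dr (Dr (vu X)) (t,r,u) - (n - 1) / r * (c + b * u powr p) * Dr (vu X) (t,r,u))
    + (2 * Dt (Du (vu X)) (t,r,u) - T2 t) * ut
    + Du (Du (vu X)) (t,r,u) * ut^2
    + ((Du (vu X) (t,r,u) - 2 * T1 t) * (c + b * u powr p) * (n - 1) / r - (c + b * u powr p) * (2 * Dr (Du (vu X)) (t,r,u) - Q2 r)
       - b * p * u powr (p - 1) * (n - 1) / r * vu X (t,r,u) + Q0 r * (c + b * u powr p) * (n - 1) / r^2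
       - (Du (vu X) (t,r,u) - Q1 r) * (c + b * u powr p) * (n - 1) / r - 2 * (a * u powr (p - 1)) * Dr (vu X) (t,r,u)) * ur
    + ((Du (vu X) (t,r,u) - 2 * T1 t) * (a * u powr (p - 1)) - (c + b * u powr p) * Du (Du (vu X)) (t,r,u) - a * (p - 1) * u powr (p - 2) * vu X (t,r,u)
       - 2 * (a * u powr (p - 1)) * (Du (vu X) (t,r,u) - Q1 r)) * ur^2
    + (2 * (c + b * u powr p) * (Q1 r - T1 t) - b * p * u powr (p - 1) * vu X (t,r,u)) * urr"
proof -
  define x where "x = (t,r,u)"
  have xO: "x \<in> Omega" using x unfolding x_def by simp
  have tT: "Dt (vt X) y = T1 (fst y)" "Dr (vt X) y = 0" "Du (vt X) y = 0" if "y \<in> Omega" for y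
    using REP_t[of "vt X" T0 T1 y] hT T01 that by auto
  have tQ: "Dt (vr X) y = 0" "Dr (vr X) y = Q1 (fst (snd y))" "Du (vr X) y = 0" if "y \<in> Omega" for y
    using REP_r[of "vr X" Q0 Q1 y] hQ Q01 that by auto
  have dT: "\<forall>y\<in>Omega. Dt (vt X) y = T1 (fst y)" using tT by auto
  have uT: "\<forall>y\<in>Omega. Du (vt X) y = 0" using tT by auto
  have rT: "\<forall>y\<in>Omega. Dr (vt X) y = 0" using tT by auto
  have rQ: "\<forall>y\<in>Omega. Dr (vr X) y = Q1 (fst (snd y))" using tQ by auto
  have uQ: "\<forall>y\<in>Omega. Du (vr X) y = 0" using tQ by auto
  have tQ0: "\<forall>y\<in>Omega. Dt (vr X) y = 0" using tQ by auto
  have z: "Du (vr X) x = 0" "Du (vt X) x = 0" "Dr (vt X) x = 0" "Dt (vr X) x = 0"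
    "Du (Du (vt X)) x = 0" "Dt (Du (vt X)) x = 0" "Dr (Du (vt X)) x = 0"
    "Du (Du (vr X)) x = 0" "Dt (Du (vr X)) x = 0" "Dr (Du (vr X)) x = 0"
    "Dr (Dr (vt X)) x = 0" "Dt (Dt (vr X)) x = 0"
    using zero_D[OF uT xO] zero_D[OF rT xO] zero_D[OF uQ xO] zero_D[OF tQ0 xO] tT[OF xO] tQ[OF xO] by auto
  have v: "Dt (vt X) x = T1 t" "Dt (Dt (vt X)) x = T2 t" "Dr (vr X) x = Q1 r" "Dr (Dr (vr X)) x = Q2 r"
    "vr X x = Q0 r"
    using tT[OF xO] REP_t[of "Dt (vt X)" T1 T2 x] REP_r[of "Dr (vr X)" Q1 Q2 x] dT T12 rQ Q12 hQ xO unfolding x_def by auto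
  have rne: "r \<noteq> 0" using x by simp
  show ?thesis
    using expand2[where a=a and b=b and c=c and p=p and n=n and ut=ut and ur=ur and utr=utr and urr=urr, OF refl refl x_def rne z]
    unfolding x_def[symmetric] v by (simp add: field_simps)
qed


lemma PP0:
  assumes "is_point_symmetry a b c p n X" "0 < r" "0 < u"
  shows "PP a b c p n X t r u ut ur utr urr = 0"
  using assms unfolding is_point_symmetry_def PP_def DeltaA_def by auto

lemma powr_inj2:
  fixes u v p :: real
  assumes "0 < u" "0 < v" "p \<noteq> 0" "u powr p = v powr p"
  shows "u = v"
proof -
  have "(u powr p) powr (1/p) = u" "(v powr p) powr (1/p) = v" using assms(1-3) by (simp_all add: powr_powr)
  then show ?thesis using assms(4) by metis
qed

lemma F12:
  fixes b c p :: real
  assumes "b \<noteq> 0" "p \<noteq> 0"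
  shows "c + b * 1 powr p \<noteq> c + b * 2 powr p"
proof
  assume "c + b * 1 powr p = c + b * 2 powr p"
  then have "2 powr p = 2 powr 0" using assms by simp
  then have "p = 0" using powr_inj[of 2 p 0] by simp
  then show False using assms by simp
qed

lemma const_u:
  assumes "\<forall>x\<in>Omega. f differentiable (at x)" "\<forall>x\<in>Omega. Du f x = 0" "0 < r" "0 < u" "0 < v"
  shows "f (t,r,u) = f (t,r,v)"
proof (rule pos_const[where f="\<lambda>s. f (t,r,s)"])
  fix s :: real assume "0 < s"
  then show "((\<lambda>s. f (t, r, s)) has_real_derivative 0) (at s)"
    using L1u[of f t r s] assms by auto
qed (use assms in auto)

lemma const_r:
  assumes "\<forall>x\<in>Omega. f differentiable (at x)" "\<forall>x\<in>Omega. Dr f x = 0" "0 < r" "0 < r'" "0 < u"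
  shows "f (t,r,u) = f (t,r',u)"
proof (rule pos_const[where f="\<lambda>s. f (t,s,u)"])
  fix s :: real assume "0 < s"
  then show "((\<lambda>s. f (t, s, u)) has_real_derivative 0) (at s)"
    using L1r[of f t s u] assms by auto
qed (use assms in auto)

lemma const_t:
  assumes "\<forall>x\<in>Omega. f differentiable (at x)" "\<forall>x\<in>Omega. Dt f x = 0" "0 < r" "0 < u"
  shows "f (t,r,u) = f (t',r,u)"
proof -
  have "\<forall>s. ((\<lambda>s. f (s, r, u)) has_real_derivative 0) (at s)"
    using L1t[of f _ r u] assms by auto
  then show ?thesis using DERIV_isconst_all[of "\<lambda>s. f (s,r,u)"] by blast
qed

lemma proj_u1:
  assumes "\<forall>y\<in>Omega. f y = f (fst y, fst (snd y), 1)" "\<forall>y\<in>Omega. f differentiable (at y)"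
    "0 < r" "0 < u"
  shows "Dt f (t,r,u) = Dt f (t,r,1)" "Dr f (t,r,u) = Dr f (t,r,1)"
proof -
  let ?P = "\<lambda>y::pt. (fst y, fst (snd y), 1::real)"
  have hP: "(?P has_derivative (\<lambda>h. (fst h, fst (snd h), 0))) (at (t,r,u))"
    by (auto intro!: derivative_eq_intros simp: zero_prod_def)
  have d: "f differentiable (at (?P (t,r,u)))" using assms by simp
  have l: "Dt f (t,r,u) = Dt (\<lambda>y. f (?P y)) (t,r,u)" "Dr f (t,r,u) = Dr (\<lambda>y. f (?P y)) (t,r,u)"
    using locD[of "(t,r,u)" f "\<lambda>y. f (?P y)"] assms by auto
  show "Dt f (t,r,u) = Dt f (t,r,1)" "Dr f (t,r,u) = Dr f (t,r,1)"
    unfolding l chainD[OF d hP] by (simp_all add: Dt_def Dr_def)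
qed

lemma tau_u_zero:
  fixes g :: "pt \<Rightarrow> real"
  assumes cont: "continuous_on Omega g"
    and h: "\<And>t r u. 0 < r \<Longrightarrow> 0 < u \<Longrightarrow> (c + b * u powr p) * g (t,r,u) = 0"
    and hb: "b \<noteq> 0" and hp: "p \<noteq> 0" and x: "0 < r" "0 < u"
  shows "g (t,r,u) = 0"
proof (cases "c + b * u powr p = 0")
  case False
  then show ?thesis using h[OF x, of t] by simp
next
  case True
  define s where "s = (\<lambda>k::nat. (t, r, u + inverse (real (Suc k))))"
  have "(\<lambda>k. u + inverse (real (Suc k))) \<longlonglongrightarrow> u + 0"
    by (intro tendsto_add tendsto_const LIMSEQ_inverse_real_of_nat)
  then have sl: "s \<longlonglongrightarrow> (t,r,u)"
    unfolding s_def by (intro tendsto_Pair tendsto_const) auto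
  have ic: "isCont g (t,r,u)"
  proof -
    have "(t,r,u) \<in> Omega" using x by simp
    then show ?thesis using continuous_on_eq_continuous_at[OF open_Omega] cont by blast
  qed
  have gl: "(\<lambda>k. g (s k)) \<longlonglongrightarrow> g (t,r,u)"
    using isCont_tendsto_compose[OF ic sl] .
  have z: "g (s k) = 0" for k
  proof -
    have pos: "0 < u + inverse (real (Suc k))" using x by (simp add: add_pos_pos)
    have ne: "u + inverse (real (Suc k)) \<noteq> u" by simp
    have "c + b * (u + inverse (real (Suc k))) powr p \<noteq> 0"
    proof
      assume "c + b * (u + inverse (real (Suc k))) powr p = 0"
      then have "c + b * (u + inverse (real (Suc k))) powr p = c + b * u powr p" using True by simp
      then have "b * (u + inverse (real (Suc k))) powr p = b * u powr p" by (rule add_left_imp_eq)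
      then have "(u + inverse (real (Suc k))) powr p = u powr p" using hb mult_left_cancel by blast
      then show False using powr_inj2[OF pos x(2) hp] ne by blast
    qed
    moreover have "(c + b * (u + inverse (real (Suc k))) powr p) * g (t, r, u + inverse (real (Suc k))) = 0"
      by (rule h[OF x(1) pos])
    ultimately show ?thesis unfolding s_def by simp
  qed
  then have "(\<lambda>k. g (s k)) = (\<lambda>k. 0)" by auto
  then have "(\<lambda>k. 0) \<longlonglongrightarrow> g (t,r,u)" using gl by simp
  then show ?thesis using LIMSEQ_const_iff by metis
qed


definition hh0 :: "real \<Rightarrow> real \<Rightarrow> real \<Rightarrow> real \<Rightarrow> real" where
  "hh0 b c p u = 2 * (c * u powr (1 - p) + b * u) / (b * p)"
definition hh1 :: "real \<Rightarrow> real \<Rightarrow> real \<Rightarrow> real \<Rightarrow> real" where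
  "hh1 b c p u = 2 * (c * (1 - p) * u powr (- p) + b) / (b * p)"
definition hh2 :: "real \<Rightarrow> real \<Rightarrow> real \<Rightarrow> real \<Rightarrow> real" where
  "hh2 b c p u = 2 * (c * (1 - p) * (- p) * u powr (- p - 1)) / (b * p)"

lemma hh01: "b \<noteq> 0 \<Longrightarrow> p \<noteq> 0 \<Longrightarrow> 0 < s \<Longrightarrow> (hh0 b c p has_real_derivative hh1 b c p s) (at s)"
  unfolding hh0_def[abs_def] hh1_def
  by (auto intro!: derivative_eq_intros simp: field_simps)

lemma hh12: "b \<noteq> 0 \<Longrightarrow> p \<noteq> 0 \<Longrightarrow> 0 < s \<Longrightarrow> (hh1 b c p has_real_derivative hh2 b c p s) (at s)"
  unfolding hh1_def[abs_def] hh2_def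
  by (auto intro!: derivative_eq_intros simp: field_simps)

lemma hh_id:
  assumes "0 < u" "b \<noteq> 0" "p \<noteq> 0"
  shows "b * p * u powr (p - 1) * hh0 b c p u = 2 * (c + b * u powr p)"
proof -
  have e1: "u powr (p - 1) * u powr (1 - p) = 1" using assms by (simp add: powr_add[symmetric])
  have "u powr (p - 1 + 1) = u powr (p - 1) * u powr 1" by (rule powr_add)
  then have e2: "u powr (p - 1) * u = u powr p" using assms by (simp add: abs_of_pos)
  have "b * p * u powr (p - 1) * hh0 b c p u = 2 * (c * (u powr (p - 1) * u powr (1 - p)) + b * (u powr (p - 1) * u))"
    using assms unfolding hh0_def by (simp add: field_simps)
  then show ?thesis using e1 e2 by simp
qed


lemma coef_extract:
  fixes P :: "real \<Rightarrow> real \<Rightarrow> real \<Rightarrow> real"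
  assumes "\<And>ut ur urr. P ut ur urr = A + B * ut + C * ut^2 + D * ur + E * ur^2 + H * urr"
    "\<And>ut ur urr. P ut ur urr = 0"
  shows "A = 0" "B = 0" "C = 0" "D = 0" "E = 0" "H = 0"
proof -
  have e: "A + B * ut + C * ut^2 + D * ur + E * ur^2 + H * urr = 0" for ut ur urr
    using assms by metis
  have "A = 0" using e[of 0 0 0] by simp
  moreover have "A + B + C = 0" "A - B + C = 0" using e[of 1 0 0] e[of "-1" 0 0] by simp_all
  moreover have "A + D + E = 0" "A - D + E = 0" using e[of 0 1 0] e[of 0 "-1" 0] by simp_all
  moreover have "A + H = 0" using e[of 0 0 1] by simp
  ultimately show "A = 0" "B = 0" "C = 0" "D = 0" "E = 0" "H = 0" by linarith+
qed

lemma aux_eta: "(K::real) * v = 2 * F * L \<Longrightarrow> K * h = 2 * F \<Longrightarrow> K * (v - L * h) = 0"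
  by (simp add: algebra_simps)

lemma allOmega: "(\<And>t r u. 0 < r \<Longrightarrow> 0 < u \<Longrightarrow> P (t,r,u)) \<Longrightarrow> \<forall>y\<in>Omega. P y"
  unfolding Omega_def by auto


lemma nec_struct:
  assumes hp: "p \<noteq> 0" and hb: "b \<noteq> 0" and sym: "is_point_symmetry a b c p n X"
  obtains T0 T1 T2 T3 Q0 Q1 Q2 Q3 where
    "\<forall>y\<in>Omega. vt X y = T0 (fst y)"
    "\<And>s. (T0 has_real_derivative T1 s) (at s)"
    "\<And>s. (T1 has_real_derivative T2 s) (at s)"
    "\<And>s. (T2 has_real_derivative T3 s) (at s)"
    "\<forall>y\<in>Omega. vr X y = Q0 (fst (snd y))"
    "\<And>s. 0 < s \<Longrightarrow> (Q0 has_real_derivative Q1 s) (at s)"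
    "\<And>s. 0 < s \<Longrightarrow> (Q1 has_real_derivative Q2 s) (at s)"
    "\<And>s. 0 < s \<Longrightarrow> (Q2 has_real_derivative Q3 s) (at s)"
    "\<forall>y\<in>Omega. vu X y = (Q1 (fst (snd y)) - T1 (fst y)) * hh0 b c p (snd (snd y))"
proof -
  have smT: "smooth_on Omega (vt X)" and smQ: "smooth_on Omega (vr X)" and smE: "smooth_on Omega (vu X)"
    using sym unfolding is_point_symmetry_def by auto
  have A1: "Du (vr X) (t,r,u) = 0" if "0 < r" "0 < u" for t r u
    using N1[of a b c p n X t r u] PP0[OF sym that] by simp
  have A2: "(c + b * u powr p) * Du (vt X) (t,r,u) = 0" if "0 < r" "0 < u" for t r u
    using N2[of a b c p n X t r u] PP0[OF sym that] by (simp add: algebra_simps)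
  have A3: "Dt (vr X) (t,r,u) = (c + b * u powr p) * Dr (vt X) (t,r,u)" if "0 < r" "0 < u" for t r u
    using N3[of a b c p n X t r u] PP0[OF sym that] by (simp add: algebra_simps)
  have B: "Du (vt X) (t,r,u) = 0" if "0 < r" "0 < u" for t r u
    using tau_u_zero[OF smooth_cont[OF smooth_D(3)[OF smT]] A2 hb hp that] .
  have dT: "\<forall>x\<in>Omega. vt X differentiable (at x)" using smooth_diff[OF smT] by blast
  have dQ: "\<forall>x\<in>Omega. vr X differentiable (at x)" using smooth_diff[OF smQ] by blast
  have B': "\<forall>y\<in>Omega. Du (vt X) y = 0" by (intro allOmega) (rule B)
  have A1': "\<forall>y\<in>Omega. Du (vr X) y = 0" by (intro allOmega) (rule A1)
  have C1: "vt X (t,r,u) = vt X (t,r,1)" if "0 < r" "0 < u" for t r u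
    using const_u[OF dT B', where t=t and r=r and u=u and v=1] that by simp
  have C2: "vr X (t,r,u) = vr X (t,r,1)" if "0 < r" "0 < u" for t r u
    using const_u[OF dQ A1', where t=t and r=r and u=u and v=1] that by simp
  have C1': "\<forall>y\<in>Omega. vt X y = vt X (fst y, fst (snd y), 1)" by (intro allOmega) (simp only: fst_conv snd_conv, rule C1)
  have C2': "\<forall>y\<in>Omega. vr X y = vr X (fst y, fst (snd y), 1)" by (intro allOmega) (simp only: fst_conv snd_conv, rule C2)
  have D1: "Dr (vt X) (t,r,u) = Dr (vt X) (t,r,1)" if "0 < r" "0 < u" for t r u
    using proj_u1[OF C1' dT that] by simp
  have D2: "Dt (vr X) (t,r,u) = Dt (vr X) (t,r,1)" if "0 < r" "0 < u" for t r u
    using proj_u1[OF C2' dQ that] by simp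
  have E1: "Dr (vt X) (t,r,u) = 0" if "0 < r" "0 < u" for t r u
  proof -
    have "Dt (vr X) (t,r,1) = (c + b * 1 powr p) * Dr (vt X) (t,r,1)" using A3[of r 1 t] that by simp
    moreover have "Dt (vr X) (t,r,1) = (c + b * 2 powr p) * Dr (vt X) (t,r,1)"
      using A3[of r 2 t] D1[of r 2 t] D2[of r 2 t] that by simp
    ultimately have "((c + b * 1 powr p) - (c + b * 2 powr p)) * Dr (vt X) (t,r,1) = 0"
      by (simp add: algebra_simps)
    then have "Dr (vt X) (t,r,1) = 0" using F12[OF hb hp, of c] by simp
    then show ?thesis using D1[OF that] by simp
  qed
  have E2: "Dt (vr X) (t,r,u) = 0" if "0 < r" "0 < u" for t r u
    using A3[OF that] E1[OF that] by simp
  have E1': "\<forall>y\<in>Omega. Dr (vt X) y = 0" by (intro allOmega) (rule E1)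
  have E2': "\<forall>y\<in>Omega. Dt (vr X) y = 0" by (intro allOmega) (rule E2)
  have F1: "vt X (t,r,u) = vt X (t,1,1)" if "0 < r" "0 < u" for t r u
    using C1[OF that] const_r[OF dT E1', where t=t and r=r and r'=1 and u=1] that by simp
  have F2: "vr X (t,r,u) = vr X (0,r,1)" if "0 < r" "0 < u" for t r u
    using C2[OF that] const_t[OF dQ E2', where t=t and r=r and u=1 and t'=0] that by simp
  define T0 where "T0 s = vt X (s,1,1)" for s
  define T1 where "T1 s = Dt (vt X) (s,1,1)" for s
  define T2 where "T2 s = Dt (Dt (vt X)) (s,1,1)" for s
  define T3 where "T3 s = Dt (Dt (Dt (vt X))) (s,1,1)" for s
  define Q0 where "Q0 s = vr X (0,s,1)" for s
  define Q1 where "Q1 s = Dr (vr X) (0,s,1)" for s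
  define Q2 where "Q2 s = Dr (Dr (vr X)) (0,s,1)" for s
  define Q3 where "Q3 s = Dr (Dr (Dr (vr X))) (0,s,1)" for s
  have smT2: "smooth_on Omega (Dt (Dt (vt X)))" using smooth_D(1)[OF smooth_D(1)[OF smT]] .
  have smQ2: "smooth_on Omega (Dr (Dr (vr X)))" using smooth_D(2)[OF smooth_D(2)[OF smQ]] .
  have T01: "(T0 has_real_derivative T1 s) (at s)" for s
    unfolding T0_def[abs_def] T1_def by (rule L1t) (rule smooth_diff[OF smT], simp)
  have T12: "(T1 has_real_derivative T2 s) (at s)" for s
    unfolding T1_def[abs_def] T2_def by (rule L1t) (rule smooth_diff[OF smooth_D(1)[OF smT]], simp)
  have T23: "(T2 has_real_derivative T3 s) (at s)" for s
    unfolding T2_def[abs_def] T3_def by (rule L1t) (rule smooth_diff[OF smT2], simp)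
  have Q01: "(Q0 has_real_derivative Q1 s) (at s)" if "0 < s" for s
    unfolding Q0_def[abs_def] Q1_def by (rule L1r) (rule smooth_diff[OF smQ], simp add: that)
  have Q12: "(Q1 has_real_derivative Q2 s) (at s)" if "0 < s" for s
    unfolding Q1_def[abs_def] Q2_def by (rule L1r) (rule smooth_diff[OF smooth_D(2)[OF smQ]], simp add: that)
  have Q23: "(Q2 has_real_derivative Q3 s) (at s)" if "0 < s" for s
    unfolding Q2_def[abs_def] Q3_def by (rule L1r) (rule smooth_diff[OF smQ2], simp add: that)
  have RT: "\<forall>y\<in>Omega. vt X y = T0 (fst y)" unfolding T0_def by (intro allOmega) (simp only: fst_conv snd_conv, rule F1)
  have RQ: "\<forall>y\<in>Omega. vr X y = Q0 (fst (snd y))" unfolding Q0_def by (intro allOmega) (simp only: fst_conv snd_conv, rule F2)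
  have RE: "\<forall>y\<in>Omega. vu X y = (Q1 (fst (snd y)) - T1 (fst y)) * hh0 b c p (snd (snd y))"
  proof (rule allOmega)
    fix t r u :: real assume x: "0 < r" "0 < u"
    have "2 * (c + b * u powr p) * (Q1 r - T1 t) - b * p * u powr (p - 1) * vu X (t,r,u) = 0"
      by (rule coef_extract(6)[where P="\<lambda>ut ur urr. PP a b c p n X t r u ut ur 0 urr"])
        (rule pre_expand[OF RT T01 T12 RQ Q01 Q12 x] PP0[OF sym x] | assumption)+
    then have "b * p * u powr (p - 1) * vu X (t,r,u) = 2 * (c + b * u powr p) * (Q1 r - T1 t)"
      by simp
    then have "b * p * u powr (p - 1) * (vu X (t,r,u) - (Q1 r - T1 t) * hh0 b c p u) = 0"
      using hh_id[OF x(2) hb hp, of c] by (rule aux_eta)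
    then show "vu X (t,r,u) = (Q1 (fst (snd (t,r,u))) - T1 (fst (t,r,u))) * hh0 b c p (snd (snd (t,r,u)))"
      using hb hp x by simp
  qed
  show ?thesis using that[OF RT T01 T12 T23 RQ Q01 Q12 Q23 RE] .
qed


lemma deriv_zero_on_pos:
  assumes "(f has_real_derivative D) (at r)" "0 < r" "\<And>s. 0 < s \<Longrightarrow> f s = k"
  shows "D = 0"
proof -
  have "((\<lambda>_. k) has_real_derivative D) (at r)"
    by (rule has_field_derivative_transform_within_open[OF assms(1), of "{0<..}"]) (use assms in auto)
  then show ?thesis using DERIV_unique[OF _ DERIV_const] by blast
qed

lemma hh_cz:
  assumes "c * (1 - p) = 0" "0 < u" "b \<noteq> 0"
  shows "hh0 b c p u = 2 * (b * u + p * c) / (b * p)" "hh1 b c p u = 2 / p" "hh2 b c p u = 0"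
proof -
  have "c * u powr (1 - p) = p * c"
  proof (cases "c = 0")
    case False then have "p = 1" using assms by simp
    then show ?thesis using assms by simp
  qed simp
  then show "hh0 b c p u = 2 * (b * u + p * c) / (b * p)" unfolding hh0_def by (simp add: algebra_simps)
  show "hh2 b c p u = 0" using assms unfolding hh2_def by simp
  have z: "c * (1 - p) * u powr (- p) = 0" using assms by simp
  show "hh1 b c p u = 2 / p"
    unfolding hh1_def z using assms(3) by simp
qed

lemma F_inj:
  fixes b c p u v :: real
  assumes "b \<noteq> 0" "p \<noteq> 0" "0 < u" "0 < v" "u \<noteq> v"
  shows "c + b * u powr p \<noteq> c + b * v powr p"
  using powr_inj2[OF assms(3,4,2)] assms(1,5) by auto

lemma pick:
  fixes A B b c p :: real
  assumes hb: "b \<noteq> 0" and hp: "p \<noteq> 0"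
    and h: "\<And>u. 0 < u \<Longrightarrow> b * u + p * c \<noteq> 0 \<Longrightarrow> A + (c + b * u powr p) * B = 0"
  shows "A = 0" "B = 0"
proof -
  have key: "A = 0 \<and> B = 0" if "0 < u1" "0 < u2" "u1 \<noteq> u2"
     "b * u1 + p * c \<noteq> 0" "b * u2 + p * c \<noteq> 0" for u1 u2
  proof -
    define F1 where "F1 = c + b * u1 powr p"
    define F2 where "F2 = c + b * u2 powr p"
    have e: "A + F1 * B = 0" "A + F2 * B = 0" using h that unfolding F1_def F2_def by auto
    have "(F1 - F2) * B = (A + F1 * B) - (A + F2 * B)" by (simp add: algebra_simps)
    then have "(F1 - F2) * B = 0" using e by simp
    moreover have "F1 - F2 \<noteq> 0" using F_inj[OF hb hp that(1-3), of c] unfolding F1_def F2_def by simp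
    ultimately have "B = 0" by simp
    then show ?thesis using e by simp
  qed
  have "A = 0 \<and> B = 0"
  proof (cases "b * 1 + p * c = 0")
    case True
    then have "b * 2 + p * c \<noteq> 0" "b * 3 + p * c \<noteq> 0" using hb by auto
    then show ?thesis using key[of 2 3] by simp
  next
    case False
    show ?thesis
    proof (cases "b * 2 + p * c = 0")
      case True
      then have "b * 3 + p * c \<noteq> 0" using hb by auto
      then show ?thesis using key[of 1 3] False by simp
    next
      case False2: False
      then show ?thesis using key[of 1 2] False by simp
    qed
  qed
  then show "A = 0" "B = 0" by auto
qed

lemma eD_id:
  fixes F G H Hd U Tl Qz Qo Qt r n a b p :: real
  assumes "b * p * U * H = 2 * F" "G * H = 2 * a * F / (b * p)" "Hd = 2 / p" "r \<noteq> 0" "p \<noteq> 0" "b \<noteq> 0"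
  shows "((Qo - Tl) * Hd - 2 * Tl) * F * (n - 1) / r - F * (2 * Qt * Hd - Qt)
       - b * p * U * (n - 1) / r * ((Qo - Tl) * H) + Qz * F * (n - 1) / r^2
       - ((Qo - Tl) * Hd - Qo) * F * (n - 1) / r - 2 * G * (Qt * H)
     = F * ((n - 1) * (Qz / r^2 - Qo / r) + Qt * (1 - 4 / p - 4 * a / (b * p)))"
proof -
  have "b * p * U * (n - 1) / r * ((Qo - Tl) * H) = (n - 1) / r * (Qo - Tl) * (b * p * U * H)"
    by (simp add: algebra_simps)
  then have e1: "b * p * U * (n - 1) / r * ((Qo - Tl) * H) = (n - 1) / r * (Qo - Tl) * (2 * F)"
    unfolding assms(1) .
  have "2 * G * (Qt * H) = 2 * Qt * (G * H)" by (simp add: algebra_simps)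
  then have e2: "2 * G * (Qt * H) = 2 * Qt * (2 * a * F / (b * p))" unfolding assms(2) .
  show ?thesis unfolding e1 e2 assms(3) using assms(4-6)
    by (simp add: field_simps power2_eq_square)
qed


definition Q0k :: "real \<Rightarrow> real \<Rightarrow> real \<Rightarrow> real \<Rightarrow> real \<Rightarrow> real \<Rightarrow> real \<Rightarrow> real \<Rightarrow> real \<Rightarrow> real \<Rightarrow> real" where
  "Q0k a b c p n k2 k3 k4 k5 r = k2 * r + k3 * (p * b * r / 2) + k4 * ((a + b + (1 - p) * c) * r powr (3 - n))
     + k5 * (p * b * r * ln r / 2)"
definition Q1k :: "real \<Rightarrow> real \<Rightarrow> real \<Rightarrow> real \<Rightarrow> real \<Rightarrow> real \<Rightarrow> real \<Rightarrow> real \<Rightarrow> real \<Rightarrow> real \<Rightarrow> real" where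
  "Q1k a b c p n k2 k3 k4 k5 r = k2 + k3 * (p * b / 2) + k4 * ((a + b + (1 - p) * c) * (3 - n) * r powr (2 - n))
     + k5 * (p * b * (ln r + 1) / 2)"

definition conds where
  "conds a b c p n k3 k4 k5 k6 \<longleftrightarrow> (\<not> cond3 c p \<longrightarrow> k3 = 0) \<and> (\<not> cond4 a b c p n \<longrightarrow> k4 = 0) \<and>
           (\<not> cond5 a b c p n \<longrightarrow> k5 = 0) \<and> (\<not> cond6 c p \<longrightarrow> k6 = 0)"

lemma solve_ncz:
  assumes hn: "n \<noteq> 1" and hp: "p \<noteq> 0" and hb: "b \<noteq> 0" and ncz: "c * (1 - p) \<noteq> 0"
    and T01: "\<And>s. (T0 has_real_derivative T1 s) (at s)"
    and Q01: "\<And>s. 0 < s \<Longrightarrow> (Q0 has_real_derivative Q1 s) (at s)"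
    and Q12: "\<And>s. 0 < s \<Longrightarrow> (Q1 has_real_derivative Q2 s) (at s)"
    and eC: "\<And>t r u. 0 < r \<Longrightarrow> 0 < u \<Longrightarrow> (Q1 r - T1 t) * hh2 b c p u = 0"
    and eD: "\<And>t r u. 0 < r \<Longrightarrow> 0 < u \<Longrightarrow>
       ((Q1 r - T1 t) * hh1 b c p u - 2 * T1 t) * (c + b * u powr p) * (n - 1) / r
       - (c + b * u powr p) * (2 * Q2 r * hh1 b c p u - Q2 r)
       - b * p * u powr (p - 1) * (n - 1) / r * ((Q1 r - T1 t) * hh0 b c p u) + Q0 r * (c + b * u powr p) * (n - 1) / r^2
       - ((Q1 r - T1 t) * hh1 b c p u - Q1 r) * (c + b * u powr p) * (n - 1) / r
       - 2 * (a * u powr (p - 1)) * (Q2 r * hh0 b c p u) = 0"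
  shows "\<exists>k1 k2. (\<forall>t. T0 t = k1 + k2 * t + 0 * t^2) \<and> (\<forall>t. T1 t = k2 + 2 * 0 * t) \<and>
     (\<forall>r>0. Q0 r = Q0k a b c p n k2 0 0 0 r) \<and> (\<forall>r>0. Q1 r = Q1k a b c p n k2 0 0 0 r)"
proof -
  have h2: "hh2 b c p 1 \<noteq> 0" using ncz hp hb unfolding hh2_def by simp
  define \<alpha> where "\<alpha> = Q1 1"
  have lam: "Q1 r = T1 t" if "0 < r" for t r using eC[OF that, of 1 t] h2 by simp
  have T1a: "T1 t = \<alpha>" for t using lam[of 1 t] unfolding \<alpha>_def by simp
  have Q1a: "Q1 r = \<alpha>" if "0 < r" for r using lam[OF that, of 0] T1a by simp
  have Q2z: "Q2 r = 0" if "0 < r" for r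
    using deriv_zero_on_pos[OF Q12[OF that] that Q1a] .
  define \<gamma> where "\<gamma> = T0 0"
  have T0a: "T0 t = \<gamma> + \<alpha> * t" for t
  proof -
    have "\<forall>s. ((\<lambda>t. T0 t - \<alpha> * t) has_real_derivative 0) (at s)"
      using T01 T1a by (auto intro!: derivative_eq_intros)
    then have "T0 t - \<alpha> * t = T0 0 - \<alpha> * 0" using DERIV_isconst_all by blast
    then show ?thesis unfolding \<gamma>_def by simp
  qed
  have Fne: "\<exists>u\<in>{1,2::real}. c + b * u powr p \<noteq> 0" using F12[OF hb hp, of c] by (metis insertCI)
  have Q0a: "Q0 r = \<alpha> * r" if r: "0 < r" for r
  proof -
    obtain u where u: "u \<in> {1,2::real}" "c + b * u powr p \<noteq> 0" using Fne by blast
    have up: "0 < u" using u by auto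
    let ?F = "c + b * u powr p"
    have "((Q1 r - T1 0) * hh1 b c p u - 2 * T1 0) * ?F * (n - 1) / r
       - ?F * (2 * Q2 r * hh1 b c p u - Q2 r)
       - b * p * u powr (p - 1) * (n - 1) / r * ((Q1 r - T1 0) * hh0 b c p u) + Q0 r * ?F * (n - 1) / r^2
       - ((Q1 r - T1 0) * hh1 b c p u - Q1 r) * ?F * (n - 1) / r
       - 2 * (a * u powr (p - 1)) * (Q2 r * hh0 b c p u) = ?F * (n - 1) * (Q0 r - \<alpha> * r) / r^2"
      using Q1a[OF r] T1a[of 0] Q2z[OF r] r by (simp add: field_simps power2_eq_square)
    then have "?F * (n - 1) * (Q0 r - \<alpha> * r) / r^2 = 0" using eD[OF r up, of 0] by simp
    then show ?thesis using u hn r by simp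
  qed
  show ?thesis
    by (rule exI[of _ \<gamma>], rule exI[of _ \<alpha>])
       (use T0a T1a Q0a Q1a in \<open>auto simp: Q0k_def Q1k_def\<close>)
qed


lemma pw_m1: "0 < r \<Longrightarrow> r powr (x - 1) = r powr x / (r::real)"
  by (simp add: powr_diff)
lemma pw_p1: "0 < r \<Longrightarrow> r * r powr x = r powr (x + 1::real)"
  by (simp add: powr_add powr_one_gt_zero_iff)
lemma pw_sq: "0 < r \<Longrightarrow> r * r * r powr x = r powr (x + 2::real)"
proof -
  assume r: "0 < r"
  have "r * r * r powr x = r * r powr (x + 1)" using pw_p1[OF r, of x] by (simp add: mult.assoc)
  also have "\<dots> = r powr (x + 1 + 1)" using pw_p1[OF r, of "x + 1"] .
  finally show ?thesis by (simp add: add.assoc)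
qed

lemma pw_inv: "0 < r \<Longrightarrow> r powr x * r powr (- x) = (1::real)"
  by (simp add: powr_add[symmetric])

lemma G_cz:
  fixes a b c p u :: real
  assumes "c * (1 - p) = 0" "0 < u" "b \<noteq> 0" "p \<noteq> 0"
  shows "a * u powr (p - 1) * (2 * (b * u + p * c) / (b * p)) = 2 * a * (c + b * u powr p) / (b * p)"
proof -
  have "u powr (p - 1) * (b * u + p * c) = c + b * u powr p"
  proof (cases "c = 0")
    case True
    have "u powr (p - 1) * u = u powr p" using assms(2) by (simp add: powr_diff)
    then show ?thesis using True by (simp add: algebra_simps)
  next
    case False
    then have "p = 1" using assms(1) by simp
    then show ?thesis using assms(2) by simp
  qed
  moreover have "a * u powr (p - 1) * (2 * (b * u + p * c) / (b * p)) = 2 * a * (u powr (p - 1) * (b * u + p * c)) / (b * p)"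
    by (simp add: field_simps)
  ultimately show ?thesis by simp
qed

lemma solve_cz_part1:
  assumes hn: "n \<noteq> 1" and hp: "p \<noteq> 0" and hb: "b \<noteq> 0" and cz: "c * (1 - p) = 0"
    and T01: "\<And>s. (T0 has_real_derivative T1 s) (at s)"
    and T12: "\<And>s. (T1 has_real_derivative T2 s) (at s)"
    and T23: "\<And>s. (T2 has_real_derivative T3 s) (at s)"
    and Q01: "\<And>s. 0 < s \<Longrightarrow> (Q0 has_real_derivative Q1 s) (at s)"
    and Q12: "\<And>s. 0 < s \<Longrightarrow> (Q1 has_real_derivative Q2 s) (at s)"
    and Q23: "\<And>s. 0 < s \<Longrightarrow> (Q2 has_real_derivative Q3 s) (at s)"
    and eA: "\<And>t r u. 0 < r \<Longrightarrow> 0 < u \<Longrightarrow> - T3 t * hh0 b c p u - (c + b * u powr p) * Q3 r * hh0 b c p u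
        - (n - 1) / r * (c + b * u powr p) * Q2 r * hh0 b c p u = 0"
    and eB: "\<And>t u. 0 < u \<Longrightarrow> 2 * (- T2 t * hh1 b c p u) - T2 t = 0"
    and eD: "\<And>t r u. 0 < r \<Longrightarrow> 0 < u \<Longrightarrow>
       ((Q1 r - T1 t) * hh1 b c p u - 2 * T1 t) * (c + b * u powr p) * (n - 1) / r
       - (c + b * u powr p) * (2 * Q2 r * hh1 b c p u - Q2 r)
       - b * p * u powr (p - 1) * (n - 1) / r * ((Q1 r - T1 t) * hh0 b c p u) + Q0 r * (c + b * u powr p) * (n - 1) / r^2
       - ((Q1 r - T1 t) * hh1 b c p u - Q1 r) * (c + b * u powr p) * (n - 1) / r
       - 2 * (a * u powr (p - 1)) * (Q2 r * hh0 b c p u) = 0"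
  shows "(\<forall>t. T2 t * (4 + p) = 0) \<and> (\<forall>t. T3 t = 0) \<and>
    (\<forall>r>0. Q3 r + (n - 1) / r * Q2 r = 0) \<and>
    (\<forall>r>0. (n - 1) * (Q0 r - r * Q1 r) + (1 - 4 / p - 4 * a / (b * p)) * r^2 * Q2 r = 0)"
proof -
  note H = hh_cz[OF cz _ hb]
  have s2: "T2 t * (4 + p) = 0" for t
  proof -
    have "2 * (- T2 t * (2 / p)) - T2 t = 0" using eB[of 1 t] H(2)[of 1] by simp
    then show ?thesis using hp by (simp add: field_simps)
  qed
  have s3: "T3 t = 0 \<and> Q3 r + (n - 1) / r * Q2 r = 0" if r: "0 < r" for t r
  proof -
    have hh: "T3 t + (c + b * u powr p) * (Q3 r + (n - 1) / r * Q2 r) = 0"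
      if u: "0 < u" "b * u + p * c \<noteq> 0" for u
    proof -
      have hne: "hh0 b c p u \<noteq> 0" using H(1)[OF u(1)] u(2) hb hp by simp
      have "- T3 t * hh0 b c p u - (c + b * u powr p) * Q3 r * hh0 b c p u
        - (n - 1) / r * (c + b * u powr p) * Q2 r * hh0 b c p u
        = - hh0 b c p u * (T3 t + (c + b * u powr p) * (Q3 r + (n - 1) / r * Q2 r))"
        using r by (simp add: field_simps)
      then have "- hh0 b c p u * (T3 t + (c + b * u powr p) * (Q3 r + (n - 1) / r * Q2 r)) = 0"
        using eA[OF r u(1), of t] by simp
      then show ?thesis using hne by simp
    qed
    show ?thesis using pick[OF hb hp hh] by simp
  qed
  have Fne: "\<exists>u\<in>{1,2::real}. c + b * u powr p \<noteq> 0" using F12[OF hb hp, of c] by (metis insertCI)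
  have s4: "(n - 1) * (Q0 r - r * Q1 r) + (1 - 4 / p - 4 * a / (b * p)) * r^2 * Q2 r = 0" if r: "0 < r" for r
  proof -
    obtain u where u: "u \<in> {1,2::real}" "c + b * u powr p \<noteq> 0" using Fne by blast
    have up: "0 < u" using u by auto
    have i1: "b * p * u powr (p - 1) * hh0 b c p u = 2 * (c + b * u powr p)" using hh_id[OF up hb hp] .
    have i2: "a * u powr (p - 1) * hh0 b c p u = 2 * a * (c + b * u powr p) / (b * p)"
      using G_cz[OF cz up hb hp, of a] H(1)[OF up] by simp
    have "(c + b * u powr p) * ((n - 1) * (Q0 r / r^2 - Q1 r / r) + Q2 r * (1 - 4 / p - 4 * a / (b * p))) = 0"
      using eD[OF r up, of 0] eD_id[OF i1 i2 H(2)[OF up], where Qo="Q1 r" and Tl="T1 0" and n=n and Qt="Q2 r" and Qz="Q0 r" and r=r] r hp hb by simp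
    then have "(n - 1) * (Q0 r / r^2 - Q1 r / r) + Q2 r * (1 - 4 / p - 4 * a / (b * p)) = 0" using u by simp
    then have "r^2 * ((n - 1) * (Q0 r / r^2 - Q1 r / r) + Q2 r * (1 - 4 / p - 4 * a / (b * p))) = 0" by simp
    moreover have "r^2 * ((n - 1) * (Q0 r / r^2 - Q1 r / r) + Q2 r * (1 - 4 / p - 4 * a / (b * p)))
        = (n - 1) * (Q0 r - r * Q1 r) + (1 - 4 / p - 4 * a / (b * p)) * r^2 * Q2 r"
      using r by (simp add: field_simps power2_eq_square)
    ultimately show ?thesis by simp
  qed
  have "\<forall>t. T3 t = 0" using s3[of 1] by simp
  then show ?thesis using s2 s3 s4 by blast
qed


lemma solveT:
  assumes T01: "\<And>s. (T0 has_real_derivative T1 s) (at s)"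
    and T12: "\<And>s. (T1 has_real_derivative T2 s) (at s)"
    and T23: "\<And>s. (T2 has_real_derivative T3 s) (at s)"
    and z: "\<forall>t. T3 t = 0"
  shows "\<exists>g d e. (\<forall>t. T0 t = g + d * t + e * t^2) \<and> (\<forall>t. T1 t = d + 2 * e * t) \<and> (\<forall>t. T2 t = 2 * e)"
proof -
  define e2 where "e2 = T2 0"
  define d where "d = T1 0"
  define g where "g = T0 0"
  have a2: "T2 t = e2" for t
    unfolding e2_def using DERIV_isconst_all[of T2 t 0] T23 z by auto
  have a1: "T1 t = d + e2 * t" for t
  proof -
    have "\<forall>s. ((\<lambda>t. T1 t - e2 * t) has_real_derivative 0) (at s)"
      using T12 a2 by (auto intro!: derivative_eq_intros)
    then have "T1 t - e2 * t = T1 0 - e2 * 0" using DERIV_isconst_all by blast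
    then show ?thesis unfolding d_def by simp
  qed
  have a0: "T0 t = g + d * t + (e2 / 2) * t^2" for t
  proof -
    have "\<forall>s. ((\<lambda>t. T0 t - d * t - (e2 / 2) * t^2) has_real_derivative 0) (at s)"
      using T01 a1 by (auto intro!: derivative_eq_intros)
    then have "T0 t - d * t - (e2 / 2) * t^2 = T0 0 - d * 0 - (e2 / 2) * 0^2"
      using DERIV_isconst_all by blast
    then show ?thesis unfolding g_def by simp
  qed
  show ?thesis
    by (rule exI[of _ g], rule exI[of _ d], rule exI[of _ "e2 / 2"]) (use a0 a1 a2 in auto)
qed

lemma solveQ:
  fixes K n :: real
  assumes hn: "n \<noteq> 1"
    and Q01: "\<And>s. 0 < s \<Longrightarrow> (Q0 has_real_derivative Q1 s) (at s)"
    and Q12: "\<And>s. 0 < s \<Longrightarrow> (Q1 has_real_derivative Q2 s) (at s)"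
    and Q23: "\<And>s. 0 < s \<Longrightarrow> (Q2 has_real_derivative Q3 s) (at s)"
    and q3: "\<forall>r>0. Q3 r + (n - 1) / r * Q2 r = 0"
    and zf: "\<forall>r>0. (n - 1) * (Q0 r - r * Q1 r) + K * r^2 * Q2 r = 0"
  shows "\<exists>\<alpha> \<beta> \<gamma>. (\<forall>r>0. Q0 r = \<alpha> * r + \<beta> * r powr (3 - n) + \<gamma> * (r * ln r)) \<and>
     (\<forall>r>0. Q1 r = \<alpha> + \<beta> * (3 - n) * r powr (2 - n) + \<gamma> * (ln r + 1)) \<and>
     (\<beta> \<noteq> 0 \<longrightarrow> n \<noteq> 2 \<and> K * (3 - n) = n - 1) \<and> (\<gamma> \<noteq> 0 \<longrightarrow> n = 2 \<and> K = 1)"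
proof -
  have W: "((\<lambda>r. r powr (n - 1) * Q2 r) has_real_derivative 0) (at s)" if s: "0 < s" for s
  proof -
    have "((\<lambda>r. r powr (n - 1) * Q2 r) has_real_derivative
        ((n - 1) * s powr (n - 1 - 1)) * Q2 s + Q3 s * s powr (n - 1)) (at s)"
      by (intro DERIV_mult has_real_derivative_powr Q23 s)
    moreover have "((n - 1) * s powr (n - 1 - 1)) * Q2 s + Q3 s * s powr (n - 1) = 0"
    proof -
      have q: "Q3 s = - ((n - 1) / s * Q2 s)" using q3 s by (simp add: eq_neg_iff_add_eq_0)
      have e: "s powr (n - 1) = s * s powr (n - 1 - 1)" using pw_p1[OF s, of "n - 1 - 1"] by simp
      have e3: "(n - 1) / s * Q2 s * s = (n - 1) * Q2 s" using s by simp
      have "((n - 1) * s powr (n - 1 - 1)) * Q2 s + Q3 s * s powr (n - 1)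
          = (n - 1) * Q2 s * s powr (n - 1 - 1) - ((n - 1) / s * Q2 s * s) * s powr (n - 1 - 1)"
        unfolding q e by (simp add: algebra_simps)
      then show ?thesis unfolding e3 by simp
    qed
    ultimately show ?thesis by simp
  qed
  define C where "C = Q2 1"
  have Q2f: "Q2 r = C * r powr (1 - n)" if r: "0 < r" for r
  proof -
    have "r powr (n - 1) * Q2 r = 1 powr (n - 1) * Q2 1" by (rule pos_const[OF W r]) auto
    then have e: "r powr (n - 1) * Q2 r = C" unfolding C_def by simp
    have "r powr (1 - n) * r powr (n - 1) = 1" using r by (simp add: powr_add[symmetric])
    then have "Q2 r = r powr (1 - n) * (r powr (n - 1) * Q2 r)" by (simp add: mult.assoc[symmetric])
    then show ?thesis using e by simp
  qed
  have rel: "Q2 s * (K * (3 - n) - (n - 1)) = 0" if s: "0 < s" for s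
  proof -
    have "((\<lambda>r. (n - 1) * (Q0 r - r * Q1 r) + K * r^2 * Q2 r) has_real_derivative
        (n - 1) * (Q1 s - (Q1 s + s * Q2 s)) + K * (2 * s * Q2 s + s^2 * Q3 s)) (at s)"
      using Q01[OF s] Q12[OF s] Q23[OF s]
      by (auto intro!: derivative_eq_intros simp: algebra_simps power2_eq_square)
    then have "(n - 1) * (Q1 s - (Q1 s + s * Q2 s)) + K * (2 * s * Q2 s + s^2 * Q3 s) = 0"
      by (rule deriv_zero_on_pos[OF _ s]) (use zf in auto)
    moreover have "Q3 s = - ((n - 1) / s * Q2 s)" using q3 s by (simp add: eq_neg_iff_add_eq_0)
    ultimately have "s * s * (Q2 s * (K * (3 - n) - (n - 1))) = 0"
      using s by (simp add: field_simps power2_eq_square)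
    then show ?thesis using s by simp
  qed
  show ?thesis
  proof (cases "C = 0")
    case True
    then have Q2z: "Q2 r = 0" if "0 < r" for r using Q2f[OF that] by simp
    define \<alpha> where "\<alpha> = Q1 1"
    have Q1a: "Q1 r = \<alpha>" if r: "0 < r" for r
      unfolding \<alpha>_def by (rule pos_const[OF _ r]) (use Q12 Q2z in auto)
    have Q0a: "Q0 r = \<alpha> * r" if r: "0 < r" for r
      using zf r Q1a[OF r] Q2z[OF r] hn by auto
    show ?thesis
      by (rule exI[of _ \<alpha>], rule exI[of _ 0], rule exI[of _ 0]) (use Q0a Q1a in auto)
  next
    case False
    have relK: "K * (3 - n) = n - 1" using rel[of 1] False unfolding C_def by simp
    show ?thesis
    proof (cases "n = 2")
      case True
      have K1: "K = 1" using relK True by simp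
      have Q2f': "Q2 r = C / r" if "0 < r" for r using Q2f[OF that] True that by (simp add: powr_minus_divide)
      have Z2: "Q0 r - r * Q1 r = - C * r" if r: "0 < r" for r
        using zf[rule_format, OF r] r Q2f'[OF r] True K1 by (auto simp: power2_eq_square algebra_simps)
      have phi: "((\<lambda>r. Q0 r / r - C * ln r) has_real_derivative 0) (at s)" if s: "0 < s" for s
      proof -
        have "((\<lambda>r. Q0 r / r - C * ln r) has_real_derivative (Q1 s * s - Q0 s) / s^2 - C / s) (at s)"
          using Q01[OF s] s by (auto intro!: derivative_eq_intros simp: field_simps power2_eq_square)
        moreover have "(Q1 s * s - Q0 s) / s^2 - C / s = 0"
        proof -
          have z: "Q1 s * s - Q0 s = C * s" using Z2[OF s] by (simp add: algebra_simps)
          show ?thesis unfolding z using s by (simp add: power2_eq_square)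
        qed
        ultimately show ?thesis by simp
      qed
      define \<alpha> where "\<alpha> = Q0 1"
      have Q0a: "Q0 r = \<alpha> * r + C * (r * ln r)" if r: "0 < r" for r
      proof -
        have "Q0 r / r - C * ln r = Q0 1 / 1 - C * ln 1" by (rule pos_const[OF phi r]) auto
        then show ?thesis using r unfolding \<alpha>_def by (simp add: field_simps)
      qed
      have Q1a: "Q1 r = \<alpha> + C * (ln r + 1)" if r: "0 < r" for r
      proof -
        have "r * Q1 r = r * (\<alpha> + C * (ln r + 1))"
          using Z2[OF r] Q0a[OF r] by (simp add: algebra_simps)
        then show ?thesis using r by simp
      qed
      show ?thesis
        by (rule exI[of _ \<alpha>], rule exI[of _ 0], rule exI[of _ C]) (use Q0a Q1a True K1 False in auto)
    next
      case n2: False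
      define \<beta> where "\<beta> = K * C / ((n - 1) * (2 - n))"
      have nz: "n - 1 \<noteq> 0" "2 - n \<noteq> 0" using hn n2 by auto
      have b: "\<beta> * (2 - n) = K * C / (n - 1)" unfolding \<beta>_def using nz by simp
      have Zg: "Q0 r - r * Q1 r = - K * C * r powr (3 - n) / (n - 1)" if r: "0 < r" for r
      proof -
        have "r^2 * r powr (1 - n) = r powr (3 - n)"
          using pw_sq[OF r, of "1 - n"] by (simp add: power2_eq_square)
        then show ?thesis using zf r Q2f[OF r] hn by (auto simp: field_simps)
      qed
      have phi: "((\<lambda>r. Q0 r / r - \<beta> * r powr (2 - n)) has_real_derivative 0) (at s)" if s: "0 < s" for s
      proof -
        have "((\<lambda>r. Q0 r / r - \<beta> * r powr (2 - n)) has_real_derivative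
             (Q1 s * s - Q0 s) / s^2 - \<beta> * ((2 - n) * s powr (2 - n - 1))) (at s)"
          using Q01[OF s] s
          by (auto intro!: derivative_eq_intros has_real_derivative_powr simp: field_simps power2_eq_square)
        moreover have "(Q1 s * s - Q0 s) / s^2 - \<beta> * ((2 - n) * s powr (2 - n - 1)) = 0"
        proof -
          have e: "s powr (3 - n) = s^2 * s powr (1 - n)"
            using pw_sq[OF s, of "1 - n"] by (simp add: power2_eq_square)
          have z: "Q1 s * s - Q0 s = K * C * (s^2 * s powr (1 - n)) / (n - 1)"
            using Zg[OF s] unfolding e by (simp add: algebra_simps)
          have "(Q1 s * s - Q0 s) / s^2 - \<beta> * ((2 - n) * s powr (2 - n - 1))
              = K * C * s powr (1 - n) / (n - 1) - (\<beta> * (2 - n)) * s powr (1 - n)"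
            unfolding z using s nz by (simp add: field_simps power2_eq_square)
          then show ?thesis unfolding b by simp
        qed
        ultimately show ?thesis by simp
      qed
      define \<alpha> where "\<alpha> = Q0 1 - \<beta>"
      have Q0a: "Q0 r = \<alpha> * r + \<beta> * r powr (3 - n)" if r: "0 < r" for r
      proof -
        have "Q0 r / r - \<beta> * r powr (2 - n) = Q0 1 / 1 - \<beta> * 1 powr (2 - n)" by (rule pos_const[OF phi r]) auto
        moreover have "r * r powr (2 - n) = r powr (3 - n)" using r by (simp add: pw_p1)
        ultimately show ?thesis using r unfolding \<alpha>_def by (simp add: field_simps)
      qed
      have Q1a: "Q1 r = \<alpha> + \<beta> * (3 - n) * r powr (2 - n)" if r: "0 < r" for r
      proof -
        have e: "r powr (3 - n) = r * r powr (2 - n)" using pw_p1[OF r, of "2 - n"] by simp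
        have "r * Q1 r = Q0 r + K * C * r powr (3 - n) / (n - 1)" using Zg[OF r] by (simp add: algebra_simps)
        also have "\<dots> = \<alpha> * r + (\<beta> + K * C / (n - 1)) * r powr (3 - n)"
          unfolding Q0a[OF r] by (simp add: algebra_simps)
        also have "\<beta> + K * C / (n - 1) = \<beta> * (3 - n)" using b by (simp add: algebra_simps)
        finally have "r * Q1 r = r * (\<alpha> + \<beta> * (3 - n) * r powr (2 - n))"
          unfolding e by (simp add: algebra_simps)
        then show ?thesis using r by simp
      qed
      show ?thesis
        by (rule exI[of _ \<alpha>], rule exI[of _ \<beta>], rule exI[of _ 0]) (use Q0a Q1a n2 relK in auto)
    qed
  qed
qed


definition Ek where
  "Ek a b c p n k3 k4 k5 k6 t r u = k3 * (b * u + p * c) + k4 * ((2 - n) * r powr (2 - n) * ((b + (1 - p) * c) * u + p * c))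
     + k5 * ((1 + ln r) * (b * u + p * c)) + k6 * (t * u)"

lemma combo_eq:
  "k1 *\<^sub>R X1 (t,r,u) + k2 *\<^sub>R X2 (t,r,u) + k3 *\<^sub>R X3 b c p (t,r,u) + k4 *\<^sub>R X4 a b c p n (t,r,u)
   + k5 *\<^sub>R X5 b c p (t,r,u) + k6 *\<^sub>R X6 (t,r,u)
   = (k1 + k2 * t + k6 * t^2, Q0k a b c p n k2 k3 k4 k5 r, Ek a b c p n k3 k4 k5 k6 t r u)"
  unfolding X1_def X2_def X3_def X4_def X5_def X6_def Q0k_def Ek_def
  by (simp add: algebra_simps)

lemma eta_combo:
  assumes hn: "n \<noteq> 1" and hp: "p \<noteq> 0" and hb: "b \<noteq> 0" and cd: "conds a b c p n k3 k4 k5 k6"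
    and r: "0 < r" and u: "0 < u"
  shows "(Q1k a b c p n k2 k3 k4 k5 r - (k2 + 2 * k6 * t)) * hh0 b c p u = Ek a b c p n k3 k4 k5 k6 t r u"
proof (cases "c * (1 - p) = 0")
  case False
  then have "\<not> cond3 c p" "\<not> cond4 a b c p n" "\<not> cond5 a b c p n" "\<not> cond6 c p"
    unfolding cond3_def cond4_def cond5_def cond6_def by (auto simp: algebra_simps)
  then have "k3 = 0" "k4 = 0" "k5 = 0" "k6 = 0" using cd unfolding conds_def by auto
  then show ?thesis unfolding Q1k_def Ek_def by simp
next
  case cz: True
  have H: "hh0 b c p u = 2 * (b * u + p * c) / (b * p)" using hh_cz[OF cz u hb] by simp
  have c0: "(1 - p) * c = 0" using cz by (simp add: algebra_simps)
  have e3: "k3 * (p * b / 2) * hh0 b c p u = k3 * (b * u + p * c)"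
    unfolding H using hp hb by (simp add: field_simps)
  have e5: "k5 * (p * b * (ln r + 1) / 2) * hh0 b c p u = k5 * ((1 + ln r) * (b * u + p * c))"
    unfolding H using hp hb by (simp add: field_simps)
  have e4: "k4 * ((a + b + (1 - p) * c) * (3 - n) * r powr (2 - n)) * hh0 b c p u
      = k4 * ((2 - n) * r powr (2 - n) * ((b + (1 - p) * c) * u + p * c))"
  proof (cases "k4 = 0")
    case False
    then have c4: "cond4 a b c p n" using cd unfolding conds_def by auto
    then have rel: "(a + b) * (n - 3) = b * p * (n / 2 - 1)" unfolding cond4_def using c0 by simp
    have "2 * (a + b) * (3 - n) = b * p * (2 - n)" using rel by (simp add: algebra_simps)
    moreover have "(a + b) * (3 - n) * (2 * (b * u + p * c) / (b * p)) = (2 * (a + b) * (3 - n)) * (b * u + p * c) / (b * p)"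
      by (simp add: field_simps)
    ultimately have F: "(a + b) * (3 - n) * (2 * (b * u + p * c) / (b * p)) = (2 - n) * (b * u + p * c)"
      using hp hb by simp
    have q1: "a + b + (1 - p) * c = a + b" and q2: "(b + (1 - p) * c) * u + p * c = b * u + p * c"
      using cz by (auto simp: algebra_simps)
    have "k4 * ((a + b) * (3 - n) * r powr (2 - n)) * (2 * (b * u + p * c) / (b * p))
        = k4 * r powr (2 - n) * ((a + b) * (3 - n) * (2 * (b * u + p * c) / (b * p)))" by (simp only: mult_ac)
    also have "\<dots> = k4 * r powr (2 - n) * ((2 - n) * (b * u + p * c))" unfolding F ..
    also have "\<dots> = k4 * ((2 - n) * r powr (2 - n) * (b * u + p * c))" by (simp only: mult_ac)
    finally show ?thesis unfolding H q1 q2 .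
  qed simp
  have e6: "- (2 * k6 * t) * hh0 b c p u = k6 * (t * u)"
  proof (cases "k6 = 0")
    case False
    then have "cond6 c p" using cd unfolding conds_def by auto
    then have "c = 0" "p = -4" unfolding cond6_def by auto
    then show ?thesis unfolding H using hb by (simp add: field_simps)
  qed simp
  have "(Q1k a b c p n k2 k3 k4 k5 r - (k2 + 2 * k6 * t)) * hh0 b c p u
     = k3 * (p * b / 2) * hh0 b c p u + k4 * ((a + b + (1 - p) * c) * (3 - n) * r powr (2 - n)) * hh0 b c p u
       + k5 * (p * b * (ln r + 1) / 2) * hh0 b c p u + - (2 * k6 * t) * hh0 b c p u"
    unfolding Q1k_def by (simp add: algebra_simps)
  also have "\<dots> = Ek a b c p n k3 k4 k5 k6 t r u" unfolding e3 e4 e5 e6 Ek_def by simp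
  finally show ?thesis .
qed


lemma K_rel:
  fixes a b p n :: real
  assumes hp: "p \<noteq> 0" and hb: "b \<noteq> 0" and h: "(1 - 4 / p - 4 * a / (b * p)) * (3 - n) = n - 1"
  shows "(a + b) * (n - 3) = b * p * (n / 2 - 1)"
proof -
  have "b * p * ((1 - 4 / p - 4 * a / (b * p)) * (3 - n)) = b * p * (n - 1)" using h by simp
  moreover have "b * p * ((1 - 4 / p - 4 * a / (b * p)) * (3 - n)) = (b * p - 4 * b - 4 * a) * (3 - n)"
    using hp hb by (simp add: field_simps)
  ultimately have h2: "(b * p - 4 * b - 4 * a) * (3 - n) = b * p * (n - 1)" by simp
  have "4 * ((a + b) * (n - 3)) = 4 * (b * p * (n / 2 - 1))"
    using h2 by (simp add: algebra_simps)
  then show ?thesis by simp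
qed

lemma K_one:
  fixes a b p :: real
  assumes hp: "p \<noteq> 0" and hb: "b \<noteq> 0" and h: "1 - 4 / p - 4 * a / (b * p) = 1"
  shows "a = - b"
proof -
  have "b * p * (4 / p + 4 * a / (b * p)) = 0" using h by simp
  moreover have "b * p * (4 / p + 4 * a / (b * p)) = 4 * (a + b)" using hp hb by (simp add: field_simps)
  ultimately show ?thesis by simp
qed

lemma X_split: "X x = (vt X x, vr X x, vu X x)"
  unfolding vt_def vr_def vu_def by simp

lemma necessity:
  assumes hn: "n \<noteq> 1" and hp: "p \<noteq> 0" and hb: "b \<noteq> 0" and sym: "is_point_symmetry a b c p n X"
  shows "\<exists>k1 k2 k3 k4 k5 k6. conds a b c p n k3 k4 k5 k6 \<and>
      (\<forall>x\<in>Omega. X x = k1 *\<^sub>R X1 x + k2 *\<^sub>R X2 x + k3 *\<^sub>R X3 b c p x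
                + k4 *\<^sub>R X4 a b c p n x + k5 *\<^sub>R X5 b c p x + k6 *\<^sub>R X6 x)"
proof -
  obtain T0 T1 T2 T3 Q0 Q1 Q2 Q3 where RT: "\<forall>y\<in>Omega. vt X y = T0 (fst y)"
    and T01: "\<And>s. (T0 has_real_derivative T1 s) (at s)"
    and T12: "\<And>s. (T1 has_real_derivative T2 s) (at s)"
    and T23: "\<And>s. (T2 has_real_derivative T3 s) (at s)"
    and RQ: "\<forall>y\<in>Omega. vr X y = Q0 (fst (snd y))"
    and Q01: "\<And>s. 0 < s \<Longrightarrow> (Q0 has_real_derivative Q1 s) (at s)"
    and Q12: "\<And>s. 0 < s \<Longrightarrow> (Q1 has_real_derivative Q2 s) (at s)"
    and Q23: "\<And>s. 0 < s \<Longrightarrow> (Q2 has_real_derivative Q3 s) (at s)"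
    and RE: "\<forall>y\<in>Omega. vu X y = (Q1 (fst (snd y)) - T1 (fst y)) * hh0 b c p (snd (snd y))"
    using nec_struct[OF hp hb sym] by blast
  have h01: "\<And>s. 0 < s \<Longrightarrow> (hh0 b c p has_real_derivative hh1 b c p s) (at s)" using hh01[OF hb hp] .
  have h12: "\<And>s. 0 < s \<Longrightarrow> (hh1 b c p has_real_derivative hh2 b c p s) (at s)" using hh12[OF hb hp] .
  note D = derivs[OF RT T01 T12 T23 RQ Q01 Q12 Q23 RE h01 h12]
  have cA: "- T3 t * hh0 b c p u - (c + b * u powr p) * Q3 r * hh0 b c p u
        - (n - 1) / r * (c + b * u powr p) * Q2 r * hh0 b c p u = 0" if r: "0 < r" and u: "0 < u" for t r u
    by (rule coef_extract(1)[where P="\<lambda>ut ur urr. PP a b c p n X t r u ut ur 0 urr"])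
       (rule D PP0[OF sym r u] r u | assumption)+
  have cB: "2 * (- T2 t * hh1 b c p u) - T2 t = 0" if u: "0 < u" for t u
    by (rule coef_extract(2)[where P="\<lambda>ut ur urr. PP a b c p n X t 1 u ut ur 0 urr"])
       (rule D PP0[OF sym _ u] u | assumption | simp)+
  have cC: "(Q1 r - T1 t) * hh2 b c p u = 0" if r: "0 < r" and u: "0 < u" for t r u
    by (rule coef_extract(3)[where P="\<lambda>ut ur urr. PP a b c p n X t r u ut ur 0 urr"])
       (rule D PP0[OF sym r u] r u | assumption)+
  have cD: "((Q1 r - T1 t) * hh1 b c p u - 2 * T1 t) * (c + b * u powr p) * (n - 1) / r
       - (c + b * u powr p) * (2 * Q2 r * hh1 b c p u - Q2 r)
       - b * p * u powr (p - 1) * (n - 1) / r * ((Q1 r - T1 t) * hh0 b c p u) + Q0 r * (c + b * u powr p) * (n - 1) / r^2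
       - ((Q1 r - T1 t) * hh1 b c p u - Q1 r) * (c + b * u powr p) * (n - 1) / r
       - 2 * (a * u powr (p - 1)) * (Q2 r * hh0 b c p u) = 0" if r: "0 < r" and u: "0 < u" for t r u
    by (rule coef_extract(4)[where P="\<lambda>ut ur urr. PP a b c p n X t r u ut ur 0 urr"])
       (rule D PP0[OF sym r u] r u | assumption)+
  have main: "\<exists>k1 k2 k3 k4 k5 k6. conds a b c p n k3 k4 k5 k6 \<and> (\<forall>t. T0 t = k1 + k2 * t + k6 * t^2) \<and>
     (\<forall>t. T1 t = k2 + 2 * k6 * t) \<and> (\<forall>r>0. Q0 r = Q0k a b c p n k2 k3 k4 k5 r) \<and>
     (\<forall>r>0. Q1 r = Q1k a b c p n k2 k3 k4 k5 r)"
  proof (cases "c * (1 - p) = 0")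
    case False
    have "\<exists>k1 k2. (\<forall>t. T0 t = k1 + k2 * t + 0 * t^2) \<and> (\<forall>t. T1 t = k2 + 2 * 0 * t) \<and>
     (\<forall>r>0. Q0 r = Q0k a b c p n k2 0 0 0 r) \<and> (\<forall>r>0. Q1 r = Q1k a b c p n k2 0 0 0 r)"
      by (rule solve_ncz[OF hn hp hb False]) (rule T01 Q01 Q12 cC cD | assumption)+
    then obtain k1 k2 where "(\<forall>t. T0 t = k1 + k2 * t + 0 * t^2) \<and> (\<forall>t. T1 t = k2 + 2 * 0 * t) \<and>
     (\<forall>r>0. Q0 r = Q0k a b c p n k2 0 0 0 r) \<and> (\<forall>r>0. Q1 r = Q1k a b c p n k2 0 0 0 r)" by blast
    moreover have "conds a b c p n 0 0 0 0" unfolding conds_def by simp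
    ultimately show ?thesis by blast
  next
    case cz: True
    have P: "(\<forall>t. T2 t * (4 + p) = 0) \<and> (\<forall>t. T3 t = 0) \<and>
      (\<forall>r>0. Q3 r + (n - 1) / r * Q2 r = 0) \<and>
      (\<forall>r>0. (n - 1) * (Q0 r - r * Q1 r) + (1 - 4 / p - 4 * a / (b * p)) * r^2 * Q2 r = 0)"
      by (rule solve_cz_part1[OF hn hp hb cz]) (rule T01 T12 T23 Q01 Q12 Q23 cA cB cD | assumption)+
    then have P2: "\<forall>t. T2 t * (4 + p) = 0" and P3: "\<forall>t. T3 t = 0"
      and P4: "\<forall>r>0. Q3 r + (n - 1) / r * Q2 r = 0"
      and P5: "\<forall>r>0. (n - 1) * (Q0 r - r * Q1 r) + (1 - 4 / p - 4 * a / (b * p)) * r^2 * Q2 r = 0"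
      by auto
    obtain g d e where TT: "\<forall>t. T0 t = g + d * t + e * t^2" "\<forall>t. T1 t = d + 2 * e * t" "\<forall>t. T2 t = 2 * e"
      using solveT[OF T01 T12 T23 P3] by blast
    have "\<exists>\<alpha> \<beta> \<gamma>. (\<forall>r>0. Q0 r = \<alpha> * r + \<beta> * r powr (3 - n) + \<gamma> * (r * ln r)) \<and>
     (\<forall>r>0. Q1 r = \<alpha> + \<beta> * (3 - n) * r powr (2 - n) + \<gamma> * (ln r + 1)) \<and>
     (\<beta> \<noteq> 0 \<longrightarrow> n \<noteq> 2 \<and> (1 - 4 / p - 4 * a / (b * p)) * (3 - n) = n - 1) \<and>
     (\<gamma> \<noteq> 0 \<longrightarrow> n = 2 \<and> (1 - 4 / p - 4 * a / (b * p)) = 1)"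
      by (rule solveQ[OF hn]) (rule Q01 Q12 Q23 P4 P5 | assumption)+
    then obtain \<alpha> \<beta> \<gamma> where QQ: "\<forall>r>0. Q0 r = \<alpha> * r + \<beta> * r powr (3 - n) + \<gamma> * (r * ln r)"
       "\<forall>r>0. Q1 r = \<alpha> + \<beta> * (3 - n) * r powr (2 - n) + \<gamma> * (ln r + 1)"
       "\<beta> \<noteq> 0 \<longrightarrow> n \<noteq> 2 \<and> (1 - 4 / p - 4 * a / (b * p)) * (3 - n) = n - 1"
       "\<gamma> \<noteq> 0 \<longrightarrow> n = 2 \<and> (1 - 4 / p - 4 * a / (b * p)) = 1"
      by blast
    define A4 where "A4 = a + b + (1 - p) * c"
    have A4e: "A4 = a + b" unfolding A4_def using cz by (simp add: algebra_simps)
    have b4: "cond4 a b c p n \<and> A4 \<noteq> 0" if "\<beta> \<noteq> 0"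
    proof -
      have n2: "n \<noteq> 2" and rel: "(1 - 4 / p - 4 * a / (b * p)) * (3 - n) = n - 1" using QQ(3) that by auto
      have r4: "(a + b) * (n - 3) = b * p * (n / 2 - 1)" using K_rel[OF hp hb rel] .
      have "A4 \<noteq> 0"
      proof
        assume "A4 = 0"
        then have "b * p * (n / 2 - 1) = 0" using r4 A4e by simp
        then show False using hb hp n2 by simp
      qed
      moreover have "cond4 a b c p n"
      proof -
        have e: "a + b + (1 - p) * c = a + b" using A4e A4_def by simp
        have "c * (p - 1) = 0" using cz by (simp add: algebra_simps)
        then show ?thesis unfolding cond4_def e using n2 r4 by simp
      qed
      ultimately show ?thesis by simp
    qed
    have b5: "cond5 a b c p n" if "\<gamma> \<noteq> 0"
    proof -
      have "n = 2" "1 - 4 / p - 4 * a / (b * p) = 1" using QQ(4) that by auto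
      then show ?thesis unfolding cond5_def using K_one[OF hp hb] cz by (simp add: algebra_simps)
    qed
    have b6: "cond6 c p" if "e \<noteq> 0"
    proof -
      have "2 * e * (4 + p) = 0" using P2 TT(3) by metis
      then have "p = -4" using that by simp
      then show ?thesis unfolding cond6_def using cz by simp
    qed
    define k4 where "k4 = (if \<beta> = 0 then 0 else \<beta> / A4)"
    have k4e: "k4 * A4 = \<beta>" using b4 unfolding k4_def by auto
    have cd: "conds a b c p n (2 * (\<alpha> - d) / (p * b)) k4 (2 * \<gamma> / (p * b)) e"
      unfolding conds_def cond3_def using cz b4 b5 b6 unfolding k4_def by (auto simp: algebra_simps)
    have q0: "Q0 r = Q0k a b c p n d (2 * (\<alpha> - d) / (p * b)) k4 (2 * \<gamma> / (p * b)) r" if r: "0 < r" for r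
    proof -
      have "Q0k a b c p n d (2 * (\<alpha> - d) / (p * b)) k4 (2 * \<gamma> / (p * b)) r
          = d * r + (\<alpha> - d) * r + (k4 * A4) * r powr (3 - n) + \<gamma> * (r * ln r)"
        unfolding Q0k_def A4_def using hp hb by (simp add: field_simps)
      then show ?thesis using QQ(1) r unfolding k4e by (simp add: algebra_simps)
    qed
    have q1: "Q1 r = Q1k a b c p n d (2 * (\<alpha> - d) / (p * b)) k4 (2 * \<gamma> / (p * b)) r" if r: "0 < r" for r
    proof -
      have "Q1k a b c p n d (2 * (\<alpha> - d) / (p * b)) k4 (2 * \<gamma> / (p * b)) r
          = d + (\<alpha> - d) + (k4 * A4) * (3 - n) * r powr (2 - n) + \<gamma> * (ln r + 1)"
        unfolding Q1k_def A4_def using hp hb by (simp add: field_simps)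
      moreover have "Q1 r = \<alpha> + \<beta> * (3 - n) * r powr (2 - n) + \<gamma> * (ln r + 1)" using QQ(2) r by simp
      ultimately show ?thesis unfolding k4e by simp
    qed
    show ?thesis
      by (rule exI[of _ g], rule exI[of _ d], rule exI[of _ "2 * (\<alpha> - d) / (p * b)"], rule exI[of _ k4],
          rule exI[of _ "2 * \<gamma> / (p * b)"], rule exI[of _ e]) (use cd TT q0 q1 in auto)
  qed
  then obtain k1 k2 k3 k4 k5 k6 where cd: "conds a b c p n k3 k4 k5 k6"
    and k: "\<forall>t. T0 t = k1 + k2 * t + k6 * t^2" "\<forall>t. T1 t = k2 + 2 * k6 * t"
     "\<forall>r>0. Q0 r = Q0k a b c p n k2 k3 k4 k5 r" "\<forall>r>0. Q1 r = Q1k a b c p n k2 k3 k4 k5 r"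
    by blast
  have "X x = k1 *\<^sub>R X1 x + k2 *\<^sub>R X2 x + k3 *\<^sub>R X3 b c p x
                + k4 *\<^sub>R X4 a b c p n x + k5 *\<^sub>R X5 b c p x + k6 *\<^sub>R X6 x" if x: "x \<in> Omega" for x
  proof -
    obtain t r u where xe: "x = (t,r,u)" by (cases x) auto
    have r: "0 < r" and u: "0 < u" using x xe by auto
    have "vt X x = k1 + k2 * t + k6 * t^2" using RT x k(1) xe by simp
    moreover have "vr X x = Q0k a b c p n k2 k3 k4 k5 r" using RQ x k(3) xe r by simp
    moreover have "vu X x = Ek a b c p n k3 k4 k5 k6 t r u"
      using RE x k(2,4) xe r eta_combo[OF hn hp hb cd r u, of k2 t] by simp
    ultimately show ?thesis unfolding xe combo_eq using X_split[of X "(t,r,u)"] by simp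
  qed
  then show ?thesis using cd by blast
qed


definition Q2k :: "real \<Rightarrow> real \<Rightarrow> real \<Rightarrow> real \<Rightarrow> real \<Rightarrow> real \<Rightarrow> real \<Rightarrow> real \<Rightarrow> real" where
  "Q2k a b c p n k4 k5 r = k4 * ((a + b + (1 - p) * c) * (3 - n) * (2 - n) * r powr (1 - n)) + k5 * (p * b / 2 * (1 / r))"
definition Q3k :: "real \<Rightarrow> real \<Rightarrow> real \<Rightarrow> real \<Rightarrow> real \<Rightarrow> real \<Rightarrow> real \<Rightarrow> real \<Rightarrow> real" where
  "Q3k a b c p n k4 k5 r = k4 * ((a + b + (1 - p) * c) * (3 - n) * (2 - n) * (1 - n) * r powr (- n)) + k5 * (p * b / 2 * (- 1 / r^2))"

lemma Q01k: "0 < s \<Longrightarrow> (Q0k a b c p n k2 k3 k4 k5 has_real_derivative Q1k a b c p n k2 k3 k4 k5 s) (at s)"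
  unfolding Q0k_def[abs_def] Q1k_def
  by (auto intro!: derivative_eq_intros simp: field_simps)

lemma Q12k: "0 < s \<Longrightarrow> (Q1k a b c p n k2 k3 k4 k5 has_real_derivative Q2k a b c p n k4 k5 s) (at s)"
  unfolding Q1k_def[abs_def] Q2k_def
  by (auto intro!: derivative_eq_intros simp: field_simps)

lemma Q23k: "0 < s \<Longrightarrow> (Q2k a b c p n k4 k5 has_real_derivative Q3k a b c p n k4 k5 s) (at s)"
  unfolding Q2k_def[abs_def] Q3k_def
  by (auto intro!: derivative_eq_intros simp: field_simps power2_eq_square)


lemma q3rel:
  assumes cd: "conds a b c p n k3 k4 k5 k6" and r: "0 < r"
  shows "Q3k a b c p n k4 k5 r + (n - 1) / r * Q2k a b c p n k4 k5 r = 0"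
proof -
  define A' where "A' = (a + b + (1 - p) * c) * (3 - n) * (2 - n)"
  have pw: "r powr (- n) = r powr (1 - n) / r" using pw_m1[OF r, of "1 - n"] by simp
  have e4: "k4 * (A' * (1 - n) * r powr (- n)) + (n - 1) / r * (k4 * (A' * r powr (1 - n))) = 0"
    unfolding pw using r by (simp add: field_simps)
  have e5: "k5 * (p * b / 2 * (- 1 / r^2)) + (n - 1) / r * (k5 * (p * b / 2 * (1 / r))) = 0"
  proof (cases "k5 = 0")
    case False
    then have "n = 2" using cd unfolding conds_def cond5_def by auto
    then show ?thesis using r by (simp add: field_simps power2_eq_square)
  qed simp
  have "Q3k a b c p n k4 k5 r + (n - 1) / r * Q2k a b c p n k4 k5 r
     = (k4 * (A' * (1 - n) * r powr (- n)) + (n - 1) / r * (k4 * (A' * r powr (1 - n))))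
       + (k5 * (p * b / 2 * (- 1 / r^2)) + (n - 1) / r * (k5 * (p * b / 2 * (1 / r))))"
    unfolding Q3k_def Q2k_def A'_def by (simp add: algebra_simps)
  then show ?thesis using e4 e5 by simp
qed

lemma drel:
  assumes hp: "p \<noteq> 0" and hb: "b \<noteq> 0" and cz: "c * (1 - p) = 0"
    and cd: "conds a b c p n k3 k4 k5 k6" and r: "0 < r"
  shows "(n - 1) * (Q0k a b c p n k2 k3 k4 k5 r / r^2 - Q1k a b c p n k2 k3 k4 k5 r / r)
     + Q2k a b c p n k4 k5 r * (1 - 4 / p - 4 * a / (b * p)) = 0"
proof -
  define K where "K = 1 - 4 / p - 4 * a / (b * p)"
  define A4 where "A4 = a + b + (1 - p) * c"
  define P where "P = r powr (1 - n)"
  have p3: "r powr (3 - n) = r * r * P" unfolding P_def using pw_sq[OF r, of "1 - n"] by simp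
  have p2: "r powr (2 - n) = r * P" unfolding P_def using pw_p1[OF r, of "1 - n"] by simp
  have "(n - 1) * (Q0k a b c p n k2 k3 k4 k5 r / r^2 - Q1k a b c p n k2 k3 k4 k5 r / r)
     + Q2k a b c p n k4 k5 r * K
     = k4 * A4 * (n - 2) * P * ((n - 1) - K * (3 - n)) + k5 * (p * b / (2 * r)) * (K - (n - 1))"
    unfolding Q0k_def Q1k_def Q2k_def p3 p2 A4_def[symmetric] P_def[symmetric] using r
    by (simp add: field_simps power2_eq_square)
  moreover have "k4 * A4 * (n - 2) * P * ((n - 1) - K * (3 - n)) = 0"
  proof (cases "k4 = 0")
    case False
    then have c4: "cond4 a b c p n" using cd unfolding conds_def by auto
    then have n2: "n \<noteq> 2" and rel: "A4 * (n - 3) = b * p * (n / 2 - 1)" unfolding cond4_def A4_def by auto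
    have A4e: "A4 = a + b" unfolding A4_def using cz by (simp add: algebra_simps)
    have "b * p * (K * (3 - n)) = b * p * (n - 1)"
    proof -
      have "b * p * (K * (3 - n)) = (b * p - 4 * b - 4 * a) * (3 - n)"
        unfolding K_def using hp hb by (simp add: field_simps)
      also have "\<dots> = b * p * (n - 1)" using rel unfolding A4e by (simp add: algebra_simps)
      finally show ?thesis .
    qed
    then have "K * (3 - n) = n - 1" using hp hb by simp
    then show ?thesis by simp
  qed simp
  moreover have "k5 * (p * b / (2 * r)) * (K - (n - 1)) = 0"
  proof (cases "k5 = 0")
    case False
    then have "cond5 a b c p n" using cd unfolding conds_def by auto
    then have "n = 2" "a = - b" unfolding cond5_def by auto
    then have "K = n - 1" unfolding K_def using hp hb by (simp add: field_simps)
    then show ?thesis by simp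
  qed simp
  ultimately show ?thesis unfolding K_def by simp
qed

lemma erel:
  fixes a b c p u :: real
  assumes cz: "c * (1 - p) = 0" and u: "0 < u" and hp: "p \<noteq> 0" and hb: "b \<noteq> 0"
  shows "a * u powr (p - 1) * (2 - 2 / p) - a * (p - 1) * u powr (p - 2) * (2 * (b * u + p * c) / (b * p)) = 0"
proof (cases "c = 0")
  case True
  have e: "u powr (p - 1) = u * u powr (p - 2)" using pw_p1[OF u, of "p - 2"] by simp
  show ?thesis unfolding e True using hp hb by (simp add: field_simps)
next
  case False
  then have "p = 1" using cz by simp
  then show ?thesis by simp
qed


lemma suff_coefs:
  assumes hn: "n \<noteq> 1" and hp: "p \<noteq> 0" and hb: "b \<noteq> 0" and cd: "conds a b c p n k3 k4 k5 k6"
    and r: "0 < r" and u: "0 < u"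
    and eT1: "Ta t = k2 + 2 * k6 * t" and eT2: "Tb t = 2 * k6" and eT3: "Tc t = 0"
    and eQ0: "Qa r = Q0k a b c p n k2 k3 k4 k5 r" and eQ1: "Qb r = Q1k a b c p n k2 k3 k4 k5 r"
    and eQ2: "Qc r = Q2k a b c p n k4 k5 r" and eQ3: "Qd r = Q3k a b c p n k4 k5 r"
  shows
    "- Tc t * hh0 b c p u - (c + b * u powr p) * Qd r * hh0 b c p u - (n - 1) / r * (c + b * u powr p) * Qc r * hh0 b c p u = 0"
    "2 * (- Tb t * hh1 b c p u) - Tb t = 0"
    "(Qb r - Ta t) * hh2 b c p u = 0"
    "((Qb r - Ta t) * hh1 b c p u - 2 * Ta t) * (c + b * u powr p) * (n - 1) / r
       - (c + b * u powr p) * (2 * Qc r * hh1 b c p u - Qc r)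
       - b * p * u powr (p - 1) * (n - 1) / r * ((Qb r - Ta t) * hh0 b c p u) + Qa r * (c + b * u powr p) * (n - 1) / r^2
       - ((Qb r - Ta t) * hh1 b c p u - Qb r) * (c + b * u powr p) * (n - 1) / r
       - 2 * (a * u powr (p - 1)) * (Qc r * hh0 b c p u) = 0"
    "((Qb r - Ta t) * hh1 b c p u - 2 * Ta t) * (a * u powr (p - 1)) - (c + b * u powr p) * ((Qb r - Ta t) * hh2 b c p u)
       - a * (p - 1) * u powr (p - 2) * ((Qb r - Ta t) * hh0 b c p u)
       - 2 * (a * u powr (p - 1)) * ((Qb r - Ta t) * hh1 b c p u - Qb r) = 0"
    "2 * (c + b * u powr p) * (Qb r - Ta t) - b * p * u powr (p - 1) * ((Qb r - Ta t) * hh0 b c p u) = 0"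
proof -
  define L where "L = Qb r - Ta t"
  have Eform: "((Qb r - Ta t) * hh1 b c p u - 2 * Ta t) * (a * u powr (p - 1)) - (c + b * u powr p) * ((Qb r - Ta t) * hh2 b c p u)
       - a * (p - 1) * u powr (p - 2) * ((Qb r - Ta t) * hh0 b c p u)
       - 2 * (a * u powr (p - 1)) * ((Qb r - Ta t) * hh1 b c p u - Qb r)
     = L * (a * u powr (p - 1) * (2 - hh1 b c p u) - (c + b * u powr p) * hh2 b c p u
            - a * (p - 1) * u powr (p - 2) * hh0 b c p u)"
    unfolding L_def by (simp add: algebra_simps)
  have Hform: "2 * (c + b * u powr p) * (Qb r - Ta t) - b * p * u powr (p - 1) * ((Qb r - Ta t) * hh0 b c p u)
     = L * (2 * (c + b * u powr p) - b * p * u powr (p - 1) * hh0 b c p u)"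
    unfolding L_def by (simp add: algebra_simps)
  show "2 * (c + b * u powr p) * (Qb r - Ta t) - b * p * u powr (p - 1) * ((Qb r - Ta t) * hh0 b c p u) = 0"
    unfolding Hform using hh_id[OF u hb hp, of c] by simp
  have Aform: "- Tc t * hh0 b c p u - (c + b * u powr p) * Qd r * hh0 b c p u - (n - 1) / r * (c + b * u powr p) * Qc r * hh0 b c p u
     = - Tc t * hh0 b c p u - (c + b * u powr p) * hh0 b c p u * (Qd r + (n - 1) / r * Qc r)"
    by (simp add: algebra_simps)
  show "- Tc t * hh0 b c p u - (c + b * u powr p) * Qd r * hh0 b c p u - (n - 1) / r * (c + b * u powr p) * Qc r * hh0 b c p u = 0"
    unfolding Aform unfolding eT3 eQ3 eQ2 q3rel[OF cd r] by simp
  show "2 * (- Tb t * hh1 b c p u) - Tb t = 0"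
  proof (cases "k6 = 0")
    case False
    then have "c = 0" "p = -4" using cd unfolding conds_def cond6_def by auto
    then show ?thesis unfolding eT2 hh1_def using hb by simp
  qed (simp add: eT2)
  show "(Qb r - Ta t) * hh2 b c p u = 0" and
    "((Qb r - Ta t) * hh1 b c p u - 2 * Ta t) * (c + b * u powr p) * (n - 1) / r
       - (c + b * u powr p) * (2 * Qc r * hh1 b c p u - Qc r)
       - b * p * u powr (p - 1) * (n - 1) / r * ((Qb r - Ta t) * hh0 b c p u) + Qa r * (c + b * u powr p) * (n - 1) / r^2
       - ((Qb r - Ta t) * hh1 b c p u - Qb r) * (c + b * u powr p) * (n - 1) / r
       - 2 * (a * u powr (p - 1)) * (Qc r * hh0 b c p u) = 0" and
    "((Qb r - Ta t) * hh1 b c p u - 2 * Ta t) * (a * u powr (p - 1)) - (c + b * u powr p) * ((Qb r - Ta t) * hh2 b c p u)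
       - a * (p - 1) * u powr (p - 2) * ((Qb r - Ta t) * hh0 b c p u)
       - 2 * (a * u powr (p - 1)) * ((Qb r - Ta t) * hh1 b c p u - Qb r) = 0"
  proof -
    have "(Qb r - Ta t) * hh2 b c p u = 0 \<and>
      ((Qb r - Ta t) * hh1 b c p u - 2 * Ta t) * (c + b * u powr p) * (n - 1) / r
       - (c + b * u powr p) * (2 * Qc r * hh1 b c p u - Qc r)
       - b * p * u powr (p - 1) * (n - 1) / r * ((Qb r - Ta t) * hh0 b c p u) + Qa r * (c + b * u powr p) * (n - 1) / r^2
       - ((Qb r - Ta t) * hh1 b c p u - Qb r) * (c + b * u powr p) * (n - 1) / r
       - 2 * (a * u powr (p - 1)) * (Qc r * hh0 b c p u) = 0 \<and>
      L * (a * u powr (p - 1) * (2 - hh1 b c p u) - (c + b * u powr p) * hh2 b c p u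
            - a * (p - 1) * u powr (p - 2) * hh0 b c p u) = 0"
    proof (cases "c * (1 - p) = 0")
      case False
      then have "\<not> cond3 c p" "\<not> cond4 a b c p n" "\<not> cond5 a b c p n" "\<not> cond6 c p"
        unfolding cond3_def cond4_def cond5_def cond6_def by (auto simp: algebra_simps)
      then have z: "k3 = 0" "k4 = 0" "k5 = 0" "k6 = 0" using cd unfolding conds_def by auto
      have v: "Ta t = k2" "Qb r = k2" "Qa r = k2 * r" "Qc r = 0"
        unfolding eT1 eQ1 eQ0 eQ2 Q0k_def Q1k_def Q2k_def z by simp_all
      show ?thesis unfolding L_def v using r by (simp add: field_simps power2_eq_square)
    next
      case cz: True
      note H = hh_cz[OF cz u hb]
      have i1: "b * p * u powr (p - 1) * hh0 b c p u = 2 * (c + b * u powr p)" using hh_id[OF u hb hp] .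
      have i2: "a * u powr (p - 1) * hh0 b c p u = 2 * a * (c + b * u powr p) / (b * p)"
        using G_cz[OF cz u hb hp, of a] H(1) by simp
      have dd: "((Qb r - Ta t) * hh1 b c p u - 2 * Ta t) * (c + b * u powr p) * (n - 1) / r
       - (c + b * u powr p) * (2 * Qc r * hh1 b c p u - Qc r)
       - b * p * u powr (p - 1) * (n - 1) / r * ((Qb r - Ta t) * hh0 b c p u) + Qa r * (c + b * u powr p) * (n - 1) / r^2
       - ((Qb r - Ta t) * hh1 b c p u - Qb r) * (c + b * u powr p) * (n - 1) / r
       - 2 * (a * u powr (p - 1)) * (Qc r * hh0 b c p u) = 0"
      proof -
        have "((Qb r - Ta t) * hh1 b c p u - 2 * Ta t) * (c + b * u powr p) * (n - 1) / r
         - (c + b * u powr p) * (2 * Qc r * hh1 b c p u - Qc r)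
         - b * p * u powr (p - 1) * (n - 1) / r * ((Qb r - Ta t) * hh0 b c p u) + Qa r * (c + b * u powr p) * (n - 1) / r^2
         - ((Qb r - Ta t) * hh1 b c p u - Qb r) * (c + b * u powr p) * (n - 1) / r
         - 2 * (a * u powr (p - 1)) * (Qc r * hh0 b c p u)
         = (c + b * u powr p) * ((n - 1) * (Qa r / r^2 - Qb r / r) + Qc r * (1 - 4 / p - 4 * a / (b * p)))"
          by (rule eD_id[OF i1 i2 H(2)]) (use r hp hb in auto)
        also have "\<dots> = 0" unfolding eQ0 eQ1 eQ2 using drel[OF hp hb cz cd r, of k2] by simp
        finally show ?thesis .
      qed
      have ee: "a * u powr (p - 1) * (2 - hh1 b c p u) - (c + b * u powr p) * hh2 b c p u
            - a * (p - 1) * u powr (p - 2) * hh0 b c p u = 0"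
        unfolding H(1) H(2) H(3) using erel[OF cz u hp hb, of a] by simp
      show ?thesis using dd ee H(3) by simp
    qed
    then show "(Qb r - Ta t) * hh2 b c p u = 0" and
    "((Qb r - Ta t) * hh1 b c p u - 2 * Ta t) * (c + b * u powr p) * (n - 1) / r
       - (c + b * u powr p) * (2 * Qc r * hh1 b c p u - Qc r)
       - b * p * u powr (p - 1) * (n - 1) / r * ((Qb r - Ta t) * hh0 b c p u) + Qa r * (c + b * u powr p) * (n - 1) / r^2
       - ((Qb r - Ta t) * hh1 b c p u - Qb r) * (c + b * u powr p) * (n - 1) / r
       - 2 * (a * u powr (p - 1)) * (Qc r * hh0 b c p u) = 0" and
    "((Qb r - Ta t) * hh1 b c p u - 2 * Ta t) * (a * u powr (p - 1)) - (c + b * u powr p) * ((Qb r - Ta t) * hh2 b c p u)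
       - a * (p - 1) * u powr (p - 2) * ((Qb r - Ta t) * hh0 b c p u)
       - 2 * (a * u powr (p - 1)) * ((Qb r - Ta t) * hh1 b c p u - Qb r) = 0"
      unfolding Eform by auto
  qed
qed


lemma sufficiency:
  assumes hn: "n \<noteq> 1" and hp: "p \<noteq> 0" and hb: "b \<noteq> 0" and cd: "conds a b c p n k3 k4 k5 k6"
    and hX: "\<forall>x\<in>Omega. X x = k1 *\<^sub>R X1 x + k2 *\<^sub>R X2 x + k3 *\<^sub>R X3 b c p x
                + k4 *\<^sub>R X4 a b c p n x + k5 *\<^sub>R X5 b c p x + k6 *\<^sub>R X6 x"
  shows "is_point_symmetry a b c p n X"
proof -
  have comp: "vt X (t,r,u) = k1 + k2 * t + k6 * t^2" "vr X (t,r,u) = Q0k a b c p n k2 k3 k4 k5 r"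
    "vu X (t,r,u) = Ek a b c p n k3 k4 k5 k6 t r u" if "0 < r" "0 < u" for t r u
  proof -
    have "X (t,r,u) = (k1 + k2 * t + k6 * t^2, Q0k a b c p n k2 k3 k4 k5 r, Ek a b c p n k3 k4 k5 k6 t r u)"
      using hX that combo_eq by simp
    then show "vt X (t,r,u) = k1 + k2 * t + k6 * t^2" "vr X (t,r,u) = Q0k a b c p n k2 k3 k4 k5 r"
      "vu X (t,r,u) = Ek a b c p n k3 k4 k5 k6 t r u" unfolding vt_def vr_def vu_def by simp_all
  qed
  define T0 where "T0 = (\<lambda>s::real. k1 + k2 * s + k6 * s^2)"
  define T1 where "T1 = (\<lambda>s::real. k2 + 2 * k6 * s)"
  define T2 where "T2 = (\<lambda>s::real. 2 * k6)"
  define T3 where "T3 = (\<lambda>s::real. 0::real)"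
  define Q0 where "Q0 = Q0k a b c p n k2 k3 k4 k5"
  define Q1 where "Q1 = Q1k a b c p n k2 k3 k4 k5"
  define Q2 where "Q2 = Q2k a b c p n k4 k5"
  define Q3 where "Q3 = Q3k a b c p n k4 k5"
  have T01: "\<And>s. (T0 has_real_derivative T1 s) (at s)"
    unfolding T0_def T1_def by (auto intro!: derivative_eq_intros)
  have T12: "\<And>s. (T1 has_real_derivative T2 s) (at s)"
    unfolding T1_def T2_def by (auto intro!: derivative_eq_intros)
  have T23: "\<And>s. (T2 has_real_derivative T3 s) (at s)"
    unfolding T2_def T3_def by (auto intro!: derivative_eq_intros)
  have Q01: "\<And>s. 0 < s \<Longrightarrow> (Q0 has_real_derivative Q1 s) (at s)" unfolding Q0_def Q1_def by (rule Q01k)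
  have Q12: "\<And>s. 0 < s \<Longrightarrow> (Q1 has_real_derivative Q2 s) (at s)" unfolding Q1_def Q2_def by (rule Q12k)
  have Q23: "\<And>s. 0 < s \<Longrightarrow> (Q2 has_real_derivative Q3 s) (at s)" unfolding Q2_def Q3_def by (rule Q23k)
  have h01: "\<And>s. 0 < s \<Longrightarrow> (hh0 b c p has_real_derivative hh1 b c p s) (at s)" using hh01[OF hb hp] .
  have h12: "\<And>s. 0 < s \<Longrightarrow> (hh1 b c p has_real_derivative hh2 b c p s) (at s)" using hh12[OF hb hp] .
  have RT: "\<forall>y\<in>Omega. vt X y = T0 (fst y)" unfolding T0_def by (intro allOmega) (simp add: comp)
  have RQ: "\<forall>y\<in>Omega. vr X y = Q0 (fst (snd y))" unfolding Q0_def by (intro allOmega) (simp add: comp)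
  have RE: "\<forall>y\<in>Omega. vu X y = (Q1 (fst (snd y)) - T1 (fst y)) * hh0 b c p (snd (snd y))"
    unfolding Q1_def T1_def by (intro allOmega) (simp add: comp eta_combo[OF hn hp hb cd])
  note D = derivs[OF RT T01 T12 T23 RQ Q01 Q12 Q23 RE h01 h12]
  have inv: "prX_DeltaA a b c p n X (t, r, u) ut ur utt utr urr = 0"
    if r: "0 < r" and u: "0 < u" and dl: "DeltaA a b c p n r u ur utt urr = 0" for t r u ut ur utt utr urr
  proof -
    have utt: "utt = (c + b * u powr p) * (urr + (n - 1) / r * ur) + a * u powr (p - 1) * ur^2"
      using dl unfolding DeltaA_def by simp
    have pp: "prX_DeltaA a b c p n X (t, r, u) ut ur utt utr urr = PP a b c p n X t r u ut ur utr urr"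
      unfolding PP_def utt ..
    have z: "T1 t = k2 + 2 * k6 * t" "T2 t = 2 * k6" "T3 t = 0" "Q0 r = Q0k a b c p n k2 k3 k4 k5 r"
      "Q1 r = Q1k a b c p n k2 k3 k4 k5 r" "Q2 r = Q2k a b c p n k4 k5 r" "Q3 r = Q3k a b c p n k4 k5 r"
      unfolding T1_def T2_def T3_def Q0_def Q1_def Q2_def Q3_def by simp_all
    note zz = suff_coefs[where Ta=T1 and Tb=T2 and Tc=T3 and Qa=Q0 and Qb=Q1 and Qc=Q2 and Qd=Q3, OF hn hp hb cd r u z]
    show ?thesis unfolding pp
      apply (rule trans[OF D])
      apply (assumption | rule r u)+
      apply (simp only: zz(5))
      apply (simp only: zz(1-4,6))
      done
  qed
  have smT: "smooth_on Omega (vt X)"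
  proof -
    have "sm (\<lambda>x. k1 + k2 * fst x + k6 * (fst x * fst x))"
      by (intro sm_add sm_mult sm_const sm_t)
    then have "sm (vt X)" by (rule sm_cong) (intro allOmega, simp add: comp power2_eq_square)
    then show ?thesis by (rule sm_smooth)
  qed
  have smQ: "smooth_on Omega (vr X)"
  proof -
    have "sm (\<lambda>x. (k2 + k3 * (p * b / 2)) * fst (snd x) + (k4 * (a + b + (1 - p) * c)) * fst (snd x) powr (3 - n)
        + (k5 * (p * b / 2)) * (fst (snd x) * ln (fst (snd x))))"
      by (intro sm_add sm_mult sm_const sm_r sm_rpow sm_ln)
    then have "sm (vr X)" by (rule sm_cong) (intro allOmega, simp add: comp Q0k_def algebra_simps)
    then show ?thesis by (rule sm_smooth)
  qed
  have smE: "smooth_on Omega (vu X)"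
  proof -
    have "sm (\<lambda>x. k3 * (b * snd (snd x) + p * c)
        + (k4 * (2 - n)) * (fst (snd x) powr (2 - n) * ((b + (1 - p) * c) * snd (snd x) + p * c))
        + k5 * ((1 + ln (fst (snd x))) * (b * snd (snd x) + p * c)) + k6 * (fst x * snd (snd x)))"
      by (intro sm_add sm_mult sm_const sm_t sm_r sm_u sm_rpow sm_ln)
    then have "sm (vu X)" by (rule sm_cong) (intro allOmega, simp add: comp Ek_def algebra_simps)
    then show ?thesis by (rule sm_smooth)
  qed
  show ?thesis unfolding is_point_symmetry_def using smT smQ smE inv by blast
qed


lemma Dt_calc: assumes "sm f" "0 < r" "0 < u" "((\<lambda>s. f (s,r,u)) has_real_derivative D) (at t)"
  shows "Dt f (t,r,u) = D"
proof -
  have "f differentiable (at (t,r,u))" using sm_D[OF assms(1)] assms(2,3) by simp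
  then show ?thesis using DERIV_unique[OF L1t assms(4)] by simp
qed
lemma Dr_calc: assumes "sm f" "0 < r" "0 < u" "((\<lambda>s. f (t,s,u)) has_real_derivative D) (at r)"
  shows "Dr f (t,r,u) = D"
proof -
  have "f differentiable (at (t,r,u))" using sm_D[OF assms(1)] assms(2,3) by simp
  then show ?thesis using DERIV_unique[OF L1r assms(4)] by simp
qed
lemma Du_calc: assumes "sm f" "0 < r" "0 < u" "((\<lambda>s. f (t,r,s)) has_real_derivative D) (at u)"
  shows "Du f (t,r,u) = D"
proof -
  have "f differentiable (at (t,r,u))" using sm_D[OF assms(1)] assms(2,3) by simp
  then show ?thesis using DERIV_unique[OF L1u assms(4)] by simp
qed

lemma vt_X1_eq: "vt X1 (t,r,u) = 1"
  unfolding vt_def X1_def by simp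
lemma vt_X1_sm: "sm (vt X1)"
proof -
  have "sm (\<lambda>x. 1)" by (intro sm_add sm_mult sm_const sm_t sm_r sm_u sm_rpow sm_ln)
  then show ?thesis by (rule sm_cong) (intro allOmega, simp add: vt_X1_eq power2_eq_square)
qed
lemma vt_X1_D: assumes "0 < r" "0 < u"
  shows "Dt (vt X1) (t,r,u) = 0" "Dr (vt X1) (t,r,u) = 0" "Du (vt X1) (t,r,u) = 0"
proof -
  show "Dt (vt X1) (t,r,u) = 0"
    by (rule Dt_calc[OF vt_X1_sm assms]) (use assms in \<open>auto intro!: derivative_eq_intros simp: vt_X1_eq field_simps\<close>)
  show "Dr (vt X1) (t,r,u) = 0"
    by (rule Dr_calc[OF vt_X1_sm assms]) (use assms in \<open>auto intro!: derivative_eq_intros simp: vt_X1_eq field_simps\<close>)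
  show "Du (vt X1) (t,r,u) = 0"
    by (rule Du_calc[OF vt_X1_sm assms]) (use assms in \<open>auto intro!: derivative_eq_intros simp: vt_X1_eq field_simps\<close>)
qed

lemma vr_X1_eq: "vr X1 (t,r,u) = 0"
  unfolding vr_def X1_def by simp
lemma vr_X1_sm: "sm (vr X1)"
proof -
  have "sm (\<lambda>x. 0)" by (intro sm_add sm_mult sm_const sm_t sm_r sm_u sm_rpow sm_ln)
  then show ?thesis by (rule sm_cong) (intro allOmega, simp add: vr_X1_eq power2_eq_square)
qed
lemma vr_X1_D: assumes "0 < r" "0 < u"
  shows "Dt (vr X1) (t,r,u) = 0" "Dr (vr X1) (t,r,u) = 0" "Du (vr X1) (t,r,u) = 0"
proof -
  show "Dt (vr X1) (t,r,u) = 0"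
    by (rule Dt_calc[OF vr_X1_sm assms]) (use assms in \<open>auto intro!: derivative_eq_intros simp: vr_X1_eq field_simps\<close>)
  show "Dr (vr X1) (t,r,u) = 0"
    by (rule Dr_calc[OF vr_X1_sm assms]) (use assms in \<open>auto intro!: derivative_eq_intros simp: vr_X1_eq field_simps\<close>)
  show "Du (vr X1) (t,r,u) = 0"
    by (rule Du_calc[OF vr_X1_sm assms]) (use assms in \<open>auto intro!: derivative_eq_intros simp: vr_X1_eq field_simps\<close>)
qed

lemma vu_X1_eq: "vu X1 (t,r,u) = 0"
  unfolding vu_def X1_def by simp
lemma vu_X1_sm: "sm (vu X1)"
proof -
  have "sm (\<lambda>x. 0)" by (intro sm_add sm_mult sm_const sm_t sm_r sm_u sm_rpow sm_ln)
  then show ?thesis by (rule sm_cong) (intro allOmega, simp add: vu_X1_eq power2_eq_square)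
qed
lemma vu_X1_D: assumes "0 < r" "0 < u"
  shows "Dt (vu X1) (t,r,u) = 0" "Dr (vu X1) (t,r,u) = 0" "Du (vu X1) (t,r,u) = 0"
proof -
  show "Dt (vu X1) (t,r,u) = 0"
    by (rule Dt_calc[OF vu_X1_sm assms]) (use assms in \<open>auto intro!: derivative_eq_intros simp: vu_X1_eq field_simps\<close>)
  show "Dr (vu X1) (t,r,u) = 0"
    by (rule Dr_calc[OF vu_X1_sm assms]) (use assms in \<open>auto intro!: derivative_eq_intros simp: vu_X1_eq field_simps\<close>)
  show "Du (vu X1) (t,r,u) = 0"
    by (rule Du_calc[OF vu_X1_sm assms]) (use assms in \<open>auto intro!: derivative_eq_intros simp: vu_X1_eq field_simps\<close>)
qed

lemma vt_X2_eq: "vt X2 (t,r,u) = t"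
  unfolding vt_def X2_def by simp
lemma vt_X2_sm: "sm (vt X2)"
proof -
  have "sm (\<lambda>x. fst x)" by (intro sm_add sm_mult sm_const sm_t sm_r sm_u sm_rpow sm_ln)
  then show ?thesis by (rule sm_cong) (intro allOmega, simp add: vt_X2_eq power2_eq_square)
qed
lemma vt_X2_D: assumes "0 < r" "0 < u"
  shows "Dt (vt X2) (t,r,u) = 1" "Dr (vt X2) (t,r,u) = 0" "Du (vt X2) (t,r,u) = 0"
proof -
  show "Dt (vt X2) (t,r,u) = 1"
    by (rule Dt_calc[OF vt_X2_sm assms]) (use assms in \<open>auto intro!: derivative_eq_intros simp: vt_X2_eq field_simps\<close>)
  show "Dr (vt X2) (t,r,u) = 0"
    by (rule Dr_calc[OF vt_X2_sm assms]) (use assms in \<open>auto intro!: derivative_eq_intros simp: vt_X2_eq field_simps\<close>)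
  show "Du (vt X2) (t,r,u) = 0"
    by (rule Du_calc[OF vt_X2_sm assms]) (use assms in \<open>auto intro!: derivative_eq_intros simp: vt_X2_eq field_simps\<close>)
qed

lemma vr_X2_eq: "vr X2 (t,r,u) = r"
  unfolding vr_def X2_def by simp
lemma vr_X2_sm: "sm (vr X2)"
proof -
  have "sm (\<lambda>x. fst (snd x))" by (intro sm_add sm_mult sm_const sm_t sm_r sm_u sm_rpow sm_ln)
  then show ?thesis by (rule sm_cong) (intro allOmega, simp add: vr_X2_eq power2_eq_square)
qed
lemma vr_X2_D: assumes "0 < r" "0 < u"
  shows "Dt (vr X2) (t,r,u) = 0" "Dr (vr X2) (t,r,u) = 1" "Du (vr X2) (t,r,u) = 0"
proof -
  show "Dt (vr X2) (t,r,u) = 0"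
    by (rule Dt_calc[OF vr_X2_sm assms]) (use assms in \<open>auto intro!: derivative_eq_intros simp: vr_X2_eq field_simps\<close>)
  show "Dr (vr X2) (t,r,u) = 1"
    by (rule Dr_calc[OF vr_X2_sm assms]) (use assms in \<open>auto intro!: derivative_eq_intros simp: vr_X2_eq field_simps\<close>)
  show "Du (vr X2) (t,r,u) = 0"
    by (rule Du_calc[OF vr_X2_sm assms]) (use assms in \<open>auto intro!: derivative_eq_intros simp: vr_X2_eq field_simps\<close>)
qed

lemma vu_X2_eq: "vu X2 (t,r,u) = 0"
  unfolding vu_def X2_def by simp
lemma vu_X2_sm: "sm (vu X2)"
proof -
  have "sm (\<lambda>x. 0)" by (intro sm_add sm_mult sm_const sm_t sm_r sm_u sm_rpow sm_ln)
  then show ?thesis by (rule sm_cong) (intro allOmega, simp add: vu_X2_eq power2_eq_square)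
qed
lemma vu_X2_D: assumes "0 < r" "0 < u"
  shows "Dt (vu X2) (t,r,u) = 0" "Dr (vu X2) (t,r,u) = 0" "Du (vu X2) (t,r,u) = 0"
proof -
  show "Dt (vu X2) (t,r,u) = 0"
    by (rule Dt_calc[OF vu_X2_sm assms]) (use assms in \<open>auto intro!: derivative_eq_intros simp: vu_X2_eq field_simps\<close>)
  show "Dr (vu X2) (t,r,u) = 0"
    by (rule Dr_calc[OF vu_X2_sm assms]) (use assms in \<open>auto intro!: derivative_eq_intros simp: vu_X2_eq field_simps\<close>)
  show "Du (vu X2) (t,r,u) = 0"
    by (rule Du_calc[OF vu_X2_sm assms]) (use assms in \<open>auto intro!: derivative_eq_intros simp: vu_X2_eq field_simps\<close>)
qed

lemma vt_X3_eq: "vt (X3 b c p) (t,r,u) = 0"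
  unfolding vt_def X3_def by simp
lemma vt_X3_sm: "sm (vt (X3 b c p))"
proof -
  have "sm (\<lambda>x. 0)" by (intro sm_add sm_mult sm_const sm_t sm_r sm_u sm_rpow sm_ln)
  then show ?thesis by (rule sm_cong) (intro allOmega, simp add: vt_X3_eq power2_eq_square)
qed
lemma vt_X3_D: assumes "0 < r" "0 < u"
  shows "Dt (vt (X3 b c p)) (t,r,u) = 0" "Dr (vt (X3 b c p)) (t,r,u) = 0" "Du (vt (X3 b c p)) (t,r,u) = 0"
proof -
  show "Dt (vt (X3 b c p)) (t,r,u) = 0"
    by (rule Dt_calc[OF vt_X3_sm assms]) (use assms in \<open>auto intro!: derivative_eq_intros simp: vt_X3_eq field_simps\<close>)
  show "Dr (vt (X3 b c p)) (t,r,u) = 0"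
    by (rule Dr_calc[OF vt_X3_sm assms]) (use assms in \<open>auto intro!: derivative_eq_intros simp: vt_X3_eq field_simps\<close>)
  show "Du (vt (X3 b c p)) (t,r,u) = 0"
    by (rule Du_calc[OF vt_X3_sm assms]) (use assms in \<open>auto intro!: derivative_eq_intros simp: vt_X3_eq field_simps\<close>)
qed

lemma vr_X3_eq: "vr (X3 b c p) (t,r,u) = p * b * r / 2"
  unfolding vr_def X3_def by simp
lemma vr_X3_sm: "sm (vr (X3 b c p))"
proof -
  have "sm (\<lambda>x. p * b * fst (snd x) * (1 / 2))" by (intro sm_add sm_mult sm_const sm_t sm_r sm_u sm_rpow sm_ln)
  then show ?thesis by (rule sm_cong) (intro allOmega, simp add: vr_X3_eq power2_eq_square)
qed
lemma vr_X3_D: assumes "0 < r" "0 < u"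
  shows "Dt (vr (X3 b c p)) (t,r,u) = 0" "Dr (vr (X3 b c p)) (t,r,u) = p * b / 2" "Du (vr (X3 b c p)) (t,r,u) = 0"
proof -
  show "Dt (vr (X3 b c p)) (t,r,u) = 0"
    by (rule Dt_calc[OF vr_X3_sm assms]) (use assms in \<open>auto intro!: derivative_eq_intros simp: vr_X3_eq field_simps\<close>)
  show "Dr (vr (X3 b c p)) (t,r,u) = p * b / 2"
    by (rule Dr_calc[OF vr_X3_sm assms]) (use assms in \<open>auto intro!: derivative_eq_intros simp: vr_X3_eq field_simps\<close>)
  show "Du (vr (X3 b c p)) (t,r,u) = 0"
    by (rule Du_calc[OF vr_X3_sm assms]) (use assms in \<open>auto intro!: derivative_eq_intros simp: vr_X3_eq field_simps\<close>)
qed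

lemma vu_X3_eq: "vu (X3 b c p) (t,r,u) = b * u + p * c"
  unfolding vu_def X3_def by simp
lemma vu_X3_sm: "sm (vu (X3 b c p))"
proof -
  have "sm (\<lambda>x. b * snd (snd x) + p * c)" by (intro sm_add sm_mult sm_const sm_t sm_r sm_u sm_rpow sm_ln)
  then show ?thesis by (rule sm_cong) (intro allOmega, simp add: vu_X3_eq power2_eq_square)
qed
lemma vu_X3_D: assumes "0 < r" "0 < u"
  shows "Dt (vu (X3 b c p)) (t,r,u) = 0" "Dr (vu (X3 b c p)) (t,r,u) = 0" "Du (vu (X3 b c p)) (t,r,u) = b"
proof -
  show "Dt (vu (X3 b c p)) (t,r,u) = 0"
    by (rule Dt_calc[OF vu_X3_sm assms]) (use assms in \<open>auto intro!: derivative_eq_intros simp: vu_X3_eq field_simps\<close>)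
  show "Dr (vu (X3 b c p)) (t,r,u) = 0"
    by (rule Dr_calc[OF vu_X3_sm assms]) (use assms in \<open>auto intro!: derivative_eq_intros simp: vu_X3_eq field_simps\<close>)
  show "Du (vu (X3 b c p)) (t,r,u) = b"
    by (rule Du_calc[OF vu_X3_sm assms]) (use assms in \<open>auto intro!: derivative_eq_intros simp: vu_X3_eq field_simps\<close>)
qed

lemma vt_X4_eq: "vt (X4 a b c p n) (t,r,u) = 0"
  unfolding vt_def X4_def by simp
lemma vt_X4_sm: "sm (vt (X4 a b c p n))"
proof -
  have "sm (\<lambda>x. 0)" by (intro sm_add sm_mult sm_const sm_t sm_r sm_u sm_rpow sm_ln)
  then show ?thesis by (rule sm_cong) (intro allOmega, simp add: vt_X4_eq power2_eq_square)
qed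
lemma vt_X4_D: assumes "0 < r" "0 < u"
  shows "Dt (vt (X4 a b c p n)) (t,r,u) = 0" "Dr (vt (X4 a b c p n)) (t,r,u) = 0" "Du (vt (X4 a b c p n)) (t,r,u) = 0"
proof -
  show "Dt (vt (X4 a b c p n)) (t,r,u) = 0"
    by (rule Dt_calc[OF vt_X4_sm assms]) (use assms in \<open>auto intro!: derivative_eq_intros simp: vt_X4_eq field_simps\<close>)
  show "Dr (vt (X4 a b c p n)) (t,r,u) = 0"
    by (rule Dr_calc[OF vt_X4_sm assms]) (use assms in \<open>auto intro!: derivative_eq_intros simp: vt_X4_eq field_simps\<close>)
  show "Du (vt (X4 a b c p n)) (t,r,u) = 0"
    by (rule Du_calc[OF vt_X4_sm assms]) (use assms in \<open>auto intro!: derivative_eq_intros simp: vt_X4_eq field_simps\<close>)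
qed

lemma vr_X4_eq: "vr (X4 a b c p n) (t,r,u) = (a + b + (1 - p) * c) * r powr (3 - n)"
  unfolding vr_def X4_def by simp
lemma vr_X4_sm: "sm (vr (X4 a b c p n))"
proof -
  have "sm (\<lambda>x. (a + b + (1 - p) * c) * fst (snd x) powr (3 - n))" by (intro sm_add sm_mult sm_const sm_t sm_r sm_u sm_rpow sm_ln)
  then show ?thesis by (rule sm_cong) (intro allOmega, simp add: vr_X4_eq power2_eq_square)
qed
lemma vr_X4_D: assumes "0 < r" "0 < u"
  shows "Dt (vr (X4 a b c p n)) (t,r,u) = 0" "Dr (vr (X4 a b c p n)) (t,r,u) = (a + b + (1 - p) * c) * ((3 - n) * r powr (2 - n))" "Du (vr (X4 a b c p n)) (t,r,u) = 0"
proof -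
  show "Dt (vr (X4 a b c p n)) (t,r,u) = 0"
    by (rule Dt_calc[OF vr_X4_sm assms]) (use assms in \<open>auto intro!: derivative_eq_intros simp: vr_X4_eq field_simps\<close>)
  show "Dr (vr (X4 a b c p n)) (t,r,u) = (a + b + (1 - p) * c) * ((3 - n) * r powr (2 - n))"
    by (rule Dr_calc[OF vr_X4_sm assms]) (use assms in \<open>auto intro!: derivative_eq_intros simp: vr_X4_eq field_simps\<close>)
  show "Du (vr (X4 a b c p n)) (t,r,u) = 0"
    by (rule Du_calc[OF vr_X4_sm assms]) (use assms in \<open>auto intro!: derivative_eq_intros simp: vr_X4_eq field_simps\<close>)
qed

lemma vu_X4_eq: "vu (X4 a b c p n) (t,r,u) = (2 - n) * r powr (2 - n) * ((b + (1 - p) * c) * u + p * c)"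
  unfolding vu_def X4_def by simp
lemma vu_X4_sm: "sm (vu (X4 a b c p n))"
proof -
  have "sm (\<lambda>x. (2 - n) * fst (snd x) powr (2 - n) * ((b + (1 - p) * c) * snd (snd x) + p * c))" by (intro sm_add sm_mult sm_const sm_t sm_r sm_u sm_rpow sm_ln)
  then show ?thesis by (rule sm_cong) (intro allOmega, simp add: vu_X4_eq power2_eq_square)
qed
lemma vu_X4_D: assumes "0 < r" "0 < u"
  shows "Dt (vu (X4 a b c p n)) (t,r,u) = 0" "Dr (vu (X4 a b c p n)) (t,r,u) = (2 - n) * ((2 - n) * r powr (1 - n)) * ((b + (1 - p) * c) * u + p * c)" "Du (vu (X4 a b c p n)) (t,r,u) = (2 - n) * r powr (2 - n) * (b + (1 - p) * c)"
proof -
  show "Dt (vu (X4 a b c p n)) (t,r,u) = 0"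
    by (rule Dt_calc[OF vu_X4_sm assms]) (use assms in \<open>auto intro!: derivative_eq_intros simp: vu_X4_eq field_simps\<close>)
  show "Dr (vu (X4 a b c p n)) (t,r,u) = (2 - n) * ((2 - n) * r powr (1 - n)) * ((b + (1 - p) * c) * u + p * c)"
    by (rule Dr_calc[OF vu_X4_sm assms]) (use assms in \<open>auto intro!: derivative_eq_intros simp: vu_X4_eq field_simps\<close>)
  show "Du (vu (X4 a b c p n)) (t,r,u) = (2 - n) * r powr (2 - n) * (b + (1 - p) * c)"
    by (rule Du_calc[OF vu_X4_sm assms]) (use assms in \<open>auto intro!: derivative_eq_intros simp: vu_X4_eq field_simps\<close>)
qed

lemma vt_X5_eq: "vt (X5 b c p) (t,r,u) = 0"
  unfolding vt_def X5_def by simp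
lemma vt_X5_sm: "sm (vt (X5 b c p))"
proof -
  have "sm (\<lambda>x. 0)" by (intro sm_add sm_mult sm_const sm_t sm_r sm_u sm_rpow sm_ln)
  then show ?thesis by (rule sm_cong) (intro allOmega, simp add: vt_X5_eq power2_eq_square)
qed
lemma vt_X5_D: assumes "0 < r" "0 < u"
  shows "Dt (vt (X5 b c p)) (t,r,u) = 0" "Dr (vt (X5 b c p)) (t,r,u) = 0" "Du (vt (X5 b c p)) (t,r,u) = 0"
proof -
  show "Dt (vt (X5 b c p)) (t,r,u) = 0"
    by (rule Dt_calc[OF vt_X5_sm assms]) (use assms in \<open>auto intro!: derivative_eq_intros simp: vt_X5_eq field_simps\<close>)
  show "Dr (vt (X5 b c p)) (t,r,u) = 0"
    by (rule Dr_calc[OF vt_X5_sm assms]) (use assms in \<open>auto intro!: derivative_eq_intros simp: vt_X5_eq field_simps\<close>)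
  show "Du (vt (X5 b c p)) (t,r,u) = 0"
    by (rule Du_calc[OF vt_X5_sm assms]) (use assms in \<open>auto intro!: derivative_eq_intros simp: vt_X5_eq field_simps\<close>)
qed

lemma vr_X5_eq: "vr (X5 b c p) (t,r,u) = p * b * r * ln r / 2"
  unfolding vr_def X5_def by simp
lemma vr_X5_sm: "sm (vr (X5 b c p))"
proof -
  have "sm (\<lambda>x. p * b * fst (snd x) * ln (fst (snd x)) * (1 / 2))" by (intro sm_add sm_mult sm_const sm_t sm_r sm_u sm_rpow sm_ln)
  then show ?thesis by (rule sm_cong) (intro allOmega, simp add: vr_X5_eq power2_eq_square)
qed
lemma vr_X5_D: assumes "0 < r" "0 < u"
  shows "Dt (vr (X5 b c p)) (t,r,u) = 0" "Dr (vr (X5 b c p)) (t,r,u) = p * b * (ln r + 1) / 2" "Du (vr (X5 b c p)) (t,r,u) = 0"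
proof -
  show "Dt (vr (X5 b c p)) (t,r,u) = 0"
    by (rule Dt_calc[OF vr_X5_sm assms]) (use assms in \<open>auto intro!: derivative_eq_intros simp: vr_X5_eq field_simps\<close>)
  show "Dr (vr (X5 b c p)) (t,r,u) = p * b * (ln r + 1) / 2"
    by (rule Dr_calc[OF vr_X5_sm assms]) (use assms in \<open>auto intro!: derivative_eq_intros simp: vr_X5_eq field_simps\<close>)
  show "Du (vr (X5 b c p)) (t,r,u) = 0"
    by (rule Du_calc[OF vr_X5_sm assms]) (use assms in \<open>auto intro!: derivative_eq_intros simp: vr_X5_eq field_simps\<close>)
qed

lemma vu_X5_eq: "vu (X5 b c p) (t,r,u) = (1 + ln r) * (b * u + p * c)"
  unfolding vu_def X5_def by simp
lemma vu_X5_sm: "sm (vu (X5 b c p))"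
proof -
  have "sm (\<lambda>x. (1 + ln (fst (snd x))) * (b * snd (snd x) + p * c))" by (intro sm_add sm_mult sm_const sm_t sm_r sm_u sm_rpow sm_ln)
  then show ?thesis by (rule sm_cong) (intro allOmega, simp add: vu_X5_eq power2_eq_square)
qed
lemma vu_X5_D: assumes "0 < r" "0 < u"
  shows "Dt (vu (X5 b c p)) (t,r,u) = 0" "Dr (vu (X5 b c p)) (t,r,u) = (b * u + p * c) / r" "Du (vu (X5 b c p)) (t,r,u) = (1 + ln r) * b"
proof -
  show "Dt (vu (X5 b c p)) (t,r,u) = 0"
    by (rule Dt_calc[OF vu_X5_sm assms]) (use assms in \<open>auto intro!: derivative_eq_intros simp: vu_X5_eq field_simps\<close>)
  show "Dr (vu (X5 b c p)) (t,r,u) = (b * u + p * c) / r"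
    by (rule Dr_calc[OF vu_X5_sm assms]) (use assms in \<open>auto intro!: derivative_eq_intros simp: vu_X5_eq field_simps\<close>)
  show "Du (vu (X5 b c p)) (t,r,u) = (1 + ln r) * b"
    by (rule Du_calc[OF vu_X5_sm assms]) (use assms in \<open>auto intro!: derivative_eq_intros simp: vu_X5_eq field_simps\<close>)
qed

lemma vt_X6_eq: "vt X6 (t,r,u) = t^2"
  unfolding vt_def X6_def by simp
lemma vt_X6_sm: "sm (vt X6)"
proof -
  have "sm (\<lambda>x. fst x * fst x)" by (intro sm_add sm_mult sm_const sm_t sm_r sm_u sm_rpow sm_ln)
  then show ?thesis by (rule sm_cong) (intro allOmega, simp add: vt_X6_eq power2_eq_square)
qed
lemma vt_X6_D: assumes "0 < r" "0 < u"
  shows "Dt (vt X6) (t,r,u) = 2 * t" "Dr (vt X6) (t,r,u) = 0" "Du (vt X6) (t,r,u) = 0"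
proof -
  show "Dt (vt X6) (t,r,u) = 2 * t"
    by (rule Dt_calc[OF vt_X6_sm assms]) (use assms in \<open>auto intro!: derivative_eq_intros simp: vt_X6_eq field_simps\<close>)
  show "Dr (vt X6) (t,r,u) = 0"
    by (rule Dr_calc[OF vt_X6_sm assms]) (use assms in \<open>auto intro!: derivative_eq_intros simp: vt_X6_eq field_simps\<close>)
  show "Du (vt X6) (t,r,u) = 0"
    by (rule Du_calc[OF vt_X6_sm assms]) (use assms in \<open>auto intro!: derivative_eq_intros simp: vt_X6_eq field_simps\<close>)
qed

lemma vr_X6_eq: "vr X6 (t,r,u) = 0"
  unfolding vr_def X6_def by simp
lemma vr_X6_sm: "sm (vr X6)"
proof -
  have "sm (\<lambda>x. 0)" by (intro sm_add sm_mult sm_const sm_t sm_r sm_u sm_rpow sm_ln)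
  then show ?thesis by (rule sm_cong) (intro allOmega, simp add: vr_X6_eq power2_eq_square)
qed
lemma vr_X6_D: assumes "0 < r" "0 < u"
  shows "Dt (vr X6) (t,r,u) = 0" "Dr (vr X6) (t,r,u) = 0" "Du (vr X6) (t,r,u) = 0"
proof -
  show "Dt (vr X6) (t,r,u) = 0"
    by (rule Dt_calc[OF vr_X6_sm assms]) (use assms in \<open>auto intro!: derivative_eq_intros simp: vr_X6_eq field_simps\<close>)
  show "Dr (vr X6) (t,r,u) = 0"
    by (rule Dr_calc[OF vr_X6_sm assms]) (use assms in \<open>auto intro!: derivative_eq_intros simp: vr_X6_eq field_simps\<close>)
  show "Du (vr X6) (t,r,u) = 0"
    by (rule Du_calc[OF vr_X6_sm assms]) (use assms in \<open>auto intro!: derivative_eq_intros simp: vr_X6_eq field_simps\<close>)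
qed

lemma vu_X6_eq: "vu X6 (t,r,u) = t * u"
  unfolding vu_def X6_def by simp
lemma vu_X6_sm: "sm (vu X6)"
proof -
  have "sm (\<lambda>x. fst x * snd (snd x))" by (intro sm_add sm_mult sm_const sm_t sm_r sm_u sm_rpow sm_ln)
  then show ?thesis by (rule sm_cong) (intro allOmega, simp add: vu_X6_eq power2_eq_square)
qed
lemma vu_X6_D: assumes "0 < r" "0 < u"
  shows "Dt (vu X6) (t,r,u) = u" "Dr (vu X6) (t,r,u) = 0" "Du (vu X6) (t,r,u) = t"
proof -
  show "Dt (vu X6) (t,r,u) = u"
    by (rule Dt_calc[OF vu_X6_sm assms]) (use assms in \<open>auto intro!: derivative_eq_intros simp: vu_X6_eq field_simps\<close>)
  show "Dr (vu X6) (t,r,u) = 0"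
    by (rule Dr_calc[OF vu_X6_sm assms]) (use assms in \<open>auto intro!: derivative_eq_intros simp: vu_X6_eq field_simps\<close>)
  show "Du (vu X6) (t,r,u) = t"
    by (rule Du_calc[OF vu_X6_sm assms]) (use assms in \<open>auto intro!: derivative_eq_intros simp: vu_X6_eq field_simps\<close>)
qed

lemma X_app: "X1 (t,r,u) = (1,0,0)" "X2 (t,r,u) = (t,r,0)" "X3 b c p (t,r,u) = (0, p * b * r / 2, b * u + p * c)"
  "X4 a b c p n (t,r,u) = (0, (a + b + (1 - p) * c) * r powr (3 - n),
      (2 - n) * r powr (2 - n) * ((b + (1 - p) * c) * u + p * c))"
  "X5 b c p (t,r,u) = (0, p * b * r * ln r / 2, (1 + ln r) * (b * u + p * c))"
  "X6 (t,r,u) = (t^2, 0, t * u)"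
  unfolding X1_def X2_def X3_def X4_def X5_def X6_def by simp_all

lemma brk_unfold: "bracket X Y x = (act X (vt Y) x - act Y (vt X) x, act X (vr Y) x - act Y (vr X) x, act X (vu Y) x - act Y (vu X) x)"
  unfolding bracket_def ..

lemma brk_all:
  assumes r: "0 < r" and u: "0 < u" and hb: "b \<noteq> 0"
  shows "bracket X1 X2 (t,r,u) = X1 (t,r,u)"
    "cond3 c p \<Longrightarrow> bracket X1 (X3 b c p) (t,r,u) = 0 \<and> bracket X2 (X3 b c p) (t,r,u) = 0"
    "cond4 a b c p n \<Longrightarrow> bracket X1 (X4 a b c p n) (t,r,u) = 0 \<and>
           bracket X2 (X4 a b c p n) (t,r,u) = (2 - n) *\<^sub>R X4 a b c p n (t,r,u) \<and>
           bracket (X3 b c p) (X4 a b c p n) (t,r,u) = (p * (1 - n / 2) * b) *\<^sub>R X4 a b c p n (t,r,u)"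
    "cond5 a b c p n \<Longrightarrow> bracket X1 (X5 b c p) (t,r,u) = 0 \<and>
           bracket X2 (X5 b c p) (t,r,u) = X3 b c p (t,r,u) \<and>
           bracket (X3 b c p) (X5 b c p) (t,r,u) = (p * b / 2) *\<^sub>R X3 b c p (t,r,u)"
    "cond6 c p \<Longrightarrow> bracket X1 X6 (t,r,u) = 2 *\<^sub>R X2 (t,r,u) + (1 / b) *\<^sub>R X3 b c p (t,r,u) \<and>
           bracket X2 X6 (t,r,u) = X6 (t,r,u) \<and>
           bracket (X3 b c p) X6 (t,r,u) = 0"
    "cond4 a b c p n \<and> cond6 c p \<Longrightarrow> bracket (X4 a b c p n) X6 (t,r,u) = 0"
    "cond5 a b c p n \<and> cond6 c p \<Longrightarrow> bracket (X5 b c p) X6 (t,r,u) = 0"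
proof -
  note S = vt_X1_eq vr_X1_eq vu_X1_eq vt_X2_eq vr_X2_eq vu_X2_eq vt_X3_eq vr_X3_eq vu_X3_eq vt_X4_eq vr_X4_eq vu_X4_eq vt_X5_eq vr_X5_eq vu_X5_eq vt_X6_eq vr_X6_eq vu_X6_eq vt_X1_D[OF r u] vr_X1_D[OF r u] vu_X1_D[OF r u] vt_X2_D[OF r u] vr_X2_D[OF r u] vu_X2_D[OF r u] vt_X3_D[OF r u] vr_X3_D[OF r u] vu_X3_D[OF r u] vt_X4_D[OF r u] vr_X4_D[OF r u] vu_X4_D[OF r u] vt_X5_D[OF r u] vr_X5_D[OF r u] vu_X5_D[OF r u] vt_X6_D[OF r u] vr_X6_D[OF r u] vu_X6_D[OF r u]
  have p2: "r * r powr (2 - n) = r powr (3 - n)" using pw_p1[OF r, of "2 - n"] by simp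
  have p1: "r * r powr (1 - n) = r powr (2 - n)" using pw_p1[OF r, of "1 - n"] by simp
  show "bracket X1 X2 (t,r,u) = X1 (t,r,u)"
    unfolding brk_unfold act_def by (simp add: S X_app)
  show "cond3 c p \<Longrightarrow> bracket X1 (X3 b c p) (t,r,u) = 0 \<and> bracket X2 (X3 b c p) (t,r,u) = 0"
    unfolding brk_unfold act_def by (simp add: S zero_prod_def)
  show "cond4 a b c p n \<Longrightarrow> bracket X1 (X4 a b c p n) (t,r,u) = 0 \<and>
           bracket X2 (X4 a b c p n) (t,r,u) = (2 - n) *\<^sub>R X4 a b c p n (t,r,u) \<and>
           bracket (X3 b c p) (X4 a b c p n) (t,r,u) = (p * (1 - n / 2) * b) *\<^sub>R X4 a b c p n (t,r,u)"
  proof -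
    assume c4: "cond4 a b c p n"
    then have cc: "(1 - p) * c = 0" unfolding cond4_def by (auto simp: algebra_simps)
    have e1: "r * ((a + b + (1 - p) * c) * ((3 - n) * r powr (2 - n))) - (a + b + (1 - p) * c) * r powr (3 - n)
        = (2 - n) * ((a + b + (1 - p) * c) * r powr (3 - n))"
      unfolding p2[symmetric] by (simp add: algebra_simps)
    have e2: "r * ((2 - n) * ((2 - n) * r powr (1 - n)) * ((b + (1 - p) * c) * u + p * c))
        = (2 - n) * ((2 - n) * r powr (2 - n) * ((b + (1 - p) * c) * u + p * c))"
      unfolding p1[symmetric] by (simp add: algebra_simps)
    have e3: "p * b * r / 2 * ((a + b + (1 - p) * c) * ((3 - n) * r powr (2 - n))) - (a + b + (1 - p) * c) * r powr (3 - n) * (p * b / 2)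
        = p * (1 - n / 2) * b * ((a + b + (1 - p) * c) * r powr (3 - n))"
      unfolding p2[symmetric] by (simp add: field_simps)
    have e4: "p * b * r / 2 * ((2 - n) * ((2 - n) * r powr (1 - n)) * ((b + (1 - p) * c) * u + p * c))
        + (b * u + p * c) * ((2 - n) * r powr (2 - n) * (b + (1 - p) * c))
        - (2 - n) * r powr (2 - n) * ((b + (1 - p) * c) * u + p * c) * b
        = p * (1 - n / 2) * b * ((2 - n) * r powr (2 - n) * ((b + (1 - p) * c) * u + p * c))"
      unfolding p1[symmetric] cc by (simp add: field_simps)
    show ?thesis unfolding brk_unfold act_def using e1 e2 e3 e4 by (simp add: S X_app zero_prod_def)
  qed
  show "cond5 a b c p n \<Longrightarrow> bracket X1 (X5 b c p) (t,r,u) = 0 \<and>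
           bracket X2 (X5 b c p) (t,r,u) = X3 b c p (t,r,u) \<and>
           bracket (X3 b c p) (X5 b c p) (t,r,u) = (p * b / 2) *\<^sub>R X3 b c p (t,r,u)"
    unfolding brk_unfold act_def using r by (simp add: S X_app zero_prod_def field_simps)
  show "cond6 c p \<Longrightarrow> bracket X1 X6 (t,r,u) = 2 *\<^sub>R X2 (t,r,u) + (1 / b) *\<^sub>R X3 b c p (t,r,u) \<and>
           bracket X2 X6 (t,r,u) = X6 (t,r,u) \<and>
           bracket (X3 b c p) X6 (t,r,u) = 0"
    unfolding brk_unfold act_def cond6_def
    using hb by (auto simp: S X_app zero_prod_def field_simps power2_eq_square)
  show "cond4 a b c p n \<and> cond6 c p \<Longrightarrow> bracket (X4 a b c p n) X6 (t,r,u) = 0"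
    unfolding brk_unfold act_def cond6_def by (auto simp: S zero_prod_def algebra_simps)
  show "cond5 a b c p n \<and> cond6 c p \<Longrightarrow> bracket (X5 b c p) X6 (t,r,u) = 0"
    unfolding brk_unfold act_def cond6_def by (auto simp: S zero_prod_def algebra_simps)
qed


theorem theorem1:
  fixes a b c p n :: real
  assumes hn: "n \<noteq> 1" and hp: "p \<noteq> 0" and hb: "b \<noteq> 0"
  shows
    "(\<forall>X. is_point_symmetry a b c p n X \<longleftrightarrow>
        (\<exists>k1 k2 k3 k4 k5 k6.
           (\<not> cond3 c p \<longrightarrow> k3 = 0) \<and> (\<not> cond4 a b c p n \<longrightarrow> k4 = 0) \<and>
           (\<not> cond5 a b c p n \<longrightarrow> k5 = 0) \<and> (\<not> cond6 c p \<longrightarrow> k6 = 0) \<and>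
           (\<forall>x\<in>Omega. X x = k1 *\<^sub>R X1 x + k2 *\<^sub>R X2 x + k3 *\<^sub>R X3 b c p x
                + k4 *\<^sub>R X4 a b c p n x + k5 *\<^sub>R X5 b c p x + k6 *\<^sub>R X6 x)))
     \<and> (c \<noteq> 0 \<and> p \<noteq> 1 \<longrightarrow>
          (\<forall>X. is_point_symmetry a b c p n X \<longleftrightarrow>
             (\<exists>k1 k2. \<forall>x\<in>Omega. X x = k1 *\<^sub>R X1 x + k2 *\<^sub>R X2 x)) \<and>
          (\<forall>k1 k2. (\<forall>x\<in>Omega. k1 *\<^sub>R X1 x + k2 *\<^sub>R X2 x = 0) \<longrightarrow> k1 = 0 \<and> k2 = 0))
     \<and> (\<forall>x\<in>Omega. bracket X1 X2 x = X1 x)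
     \<and> (cond3 c p \<longrightarrow> (\<forall>x\<in>Omega. bracket X1 (X3 b c p) x = 0 \<and> bracket X2 (X3 b c p) x = 0))
     \<and> (cond4 a b c p n \<longrightarrow> (\<forall>x\<in>Omega.
           bracket X1 (X4 a b c p n) x = 0 \<and>
           bracket X2 (X4 a b c p n) x = (2 - n) *\<^sub>R X4 a b c p n x \<and>
           bracket (X3 b c p) (X4 a b c p n) x = (p * (1 - n / 2) * b) *\<^sub>R X4 a b c p n x))
     \<and> (cond5 a b c p n \<longrightarrow> (\<forall>x\<in>Omega.
           bracket X1 (X5 b c p) x = 0 \<and>
           bracket X2 (X5 b c p) x = X3 b c p x \<and>
           bracket (X3 b c p) (X5 b c p) x = (p * b / 2) *\<^sub>R X3 b c p x))
     \<and> (cond6 c p \<longrightarrow> (\<forall>x\<in>Omega.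
           bracket X1 X6 x = 2 *\<^sub>R X2 x + (1 / b) *\<^sub>R X3 b c p x \<and>
           bracket X2 X6 x = X6 x \<and>
           bracket (X3 b c p) X6 x = 0))
     \<and> (cond4 a b c p n \<and> cond6 c p \<longrightarrow> (\<forall>x\<in>Omega. bracket (X4 a b c p n) X6 x = 0))
     \<and> (cond5 a b c p n \<and> cond6 c p \<longrightarrow> (\<forall>x\<in>Omega. bracket (X5 b c p) X6 x = 0))"
proof -
  have P1: "\<forall>X. is_point_symmetry a b c p n X \<longleftrightarrow>
        (\<exists>k1 k2 k3 k4 k5 k6.
           (\<not> cond3 c p \<longrightarrow> k3 = 0) \<and> (\<not> cond4 a b c p n \<longrightarrow> k4 = 0) \<and>
           (\<not> cond5 a b c p n \<longrightarrow> k5 = 0) \<and> (\<not> cond6 c p \<longrightarrow> k6 = 0) \<and>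
           (\<forall>x\<in>Omega. X x = k1 *\<^sub>R X1 x + k2 *\<^sub>R X2 x + k3 *\<^sub>R X3 b c p x
                + k4 *\<^sub>R X4 a b c p n x + k5 *\<^sub>R X5 b c p x + k6 *\<^sub>R X6 x))"
  proof (intro allI iffI)
    fix X assume sy: "is_point_symmetry a b c p n X"
    obtain k1 k2 k3 k4 k5 k6 where h1: "conds a b c p n k3 k4 k5 k6"
      and h2: "\<forall>x\<in>Omega. X x = k1 *\<^sub>R X1 x + k2 *\<^sub>R X2 x + k3 *\<^sub>R X3 b c p x
                + k4 *\<^sub>R X4 a b c p n x + k5 *\<^sub>R X5 b c p x + k6 *\<^sub>R X6 x"
      using necessity[OF hn hp hb sy] by blast
    show "\<exists>k1 k2 k3 k4 k5 k6.
           (\<not> cond3 c p \<longrightarrow> k3 = 0) \<and> (\<not> cond4 a b c p n \<longrightarrow> k4 = 0) \<and>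
           (\<not> cond5 a b c p n \<longrightarrow> k5 = 0) \<and> (\<not> cond6 c p \<longrightarrow> k6 = 0) \<and>
           (\<forall>x\<in>Omega. X x = k1 *\<^sub>R X1 x + k2 *\<^sub>R X2 x + k3 *\<^sub>R X3 b c p x
                + k4 *\<^sub>R X4 a b c p n x + k5 *\<^sub>R X5 b c p x + k6 *\<^sub>R X6 x)"
      apply (rule exI[of _ k1], rule exI[of _ k2], rule exI[of _ k3], rule exI[of _ k4],
          rule exI[of _ k5], rule exI[of _ k6])
      using h1 h2 unfolding conds_def by blast
  next
    fix X assume "\<exists>k1 k2 k3 k4 k5 k6.
           (\<not> cond3 c p \<longrightarrow> k3 = 0) \<and> (\<not> cond4 a b c p n \<longrightarrow> k4 = 0) \<and>
           (\<not> cond5 a b c p n \<longrightarrow> k5 = 0) \<and> (\<not> cond6 c p \<longrightarrow> k6 = 0) \<and>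
           (\<forall>x\<in>Omega. X x = k1 *\<^sub>R X1 x + k2 *\<^sub>R X2 x + k3 *\<^sub>R X3 b c p x
                + k4 *\<^sub>R X4 a b c p n x + k5 *\<^sub>R X5 b c p x + k6 *\<^sub>R X6 x)"
    then obtain k1 k2 k3 k4 k5 k6 where "conds a b c p n k3 k4 k5 k6"
      "\<forall>x\<in>Omega. X x = k1 *\<^sub>R X1 x + k2 *\<^sub>R X2 x + k3 *\<^sub>R X3 b c p x
                + k4 *\<^sub>R X4 a b c p n x + k5 *\<^sub>R X5 b c p x + k6 *\<^sub>R X6 x"
      unfolding conds_def by blast
    then show "is_point_symmetry a b c p n X" using sufficiency[OF hn hp hb] by blast
  qed
  have P2: "c \<noteq> 0 \<and> p \<noteq> 1 \<longrightarrow>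
          (\<forall>X. is_point_symmetry a b c p n X \<longleftrightarrow>
             (\<exists>k1 k2. \<forall>x\<in>Omega. X x = k1 *\<^sub>R X1 x + k2 *\<^sub>R X2 x)) \<and>
          (\<forall>k1 k2. (\<forall>x\<in>Omega. k1 *\<^sub>R X1 x + k2 *\<^sub>R X2 x = 0) \<longrightarrow> k1 = 0 \<and> k2 = 0)"
  proof
    assume h: "c \<noteq> 0 \<and> p \<noteq> 1"
    then have nc: "\<not> cond3 c p" "\<not> cond4 a b c p n" "\<not> cond5 a b c p n" "\<not> cond6 c p"
      unfolding cond3_def cond4_def cond5_def cond6_def by auto
    have A: "is_point_symmetry a b c p n X \<longleftrightarrow>
             (\<exists>k1 k2. \<forall>x\<in>Omega. X x = k1 *\<^sub>R X1 x + k2 *\<^sub>R X2 x)" for X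
    proof
      assume "is_point_symmetry a b c p n X"
      then obtain k1 k2 k3 k4 k5 k6 where "conds a b c p n k3 k4 k5 k6"
        "\<forall>x\<in>Omega. X x = k1 *\<^sub>R X1 x + k2 *\<^sub>R X2 x + k3 *\<^sub>R X3 b c p x
                + k4 *\<^sub>R X4 a b c p n x + k5 *\<^sub>R X5 b c p x + k6 *\<^sub>R X6 x"
        using necessity[OF hn hp hb] by blast
      moreover have "k3 = 0" "k4 = 0" "k5 = 0" "k6 = 0" using calculation(1) nc unfolding conds_def by auto
      ultimately show "\<exists>k1 k2. \<forall>x\<in>Omega. X x = k1 *\<^sub>R X1 x + k2 *\<^sub>R X2 x" by auto
    next
      assume "\<exists>k1 k2. \<forall>x\<in>Omega. X x = k1 *\<^sub>R X1 x + k2 *\<^sub>R X2 x"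
      then obtain k1 k2 where e: "\<forall>x\<in>Omega. X x = k1 *\<^sub>R X1 x + k2 *\<^sub>R X2 x" by blast
      have "conds a b c p n 0 0 0 0" unfolding conds_def by simp
      moreover have "\<forall>x\<in>Omega. X x = k1 *\<^sub>R X1 x + k2 *\<^sub>R X2 x + 0 *\<^sub>R X3 b c p x
                + 0 *\<^sub>R X4 a b c p n x + 0 *\<^sub>R X5 b c p x + 0 *\<^sub>R X6 x" using e by simp
      ultimately show "is_point_symmetry a b c p n X" using sufficiency[OF hn hp hb] by blast
    qed
    have B: "k1 = 0 \<and> k2 = 0" if "\<forall>x\<in>Omega. k1 *\<^sub>R X1 x + k2 *\<^sub>R X2 x = 0" for k1 k2
    proof -
      have "k1 *\<^sub>R X1 (0,1,1) + k2 *\<^sub>R X2 (0,1,1) = 0" using that by simp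
      then show ?thesis by (simp add: X_app zero_prod_def)
    qed
    show "(\<forall>X. is_point_symmetry a b c p n X \<longleftrightarrow>
             (\<exists>k1 k2. \<forall>x\<in>Omega. X x = k1 *\<^sub>R X1 x + k2 *\<^sub>R X2 x)) \<and>
          (\<forall>k1 k2. (\<forall>x\<in>Omega. k1 *\<^sub>R X1 x + k2 *\<^sub>R X2 x = 0) \<longrightarrow> k1 = 0 \<and> k2 = 0)"
      using A B by blast
  qed
  have BR: "\<And>x. x \<in> Omega \<Longrightarrow> \<exists>t r u. x = (t,r,u) \<and> 0 < r \<and> 0 < u"
    unfolding Omega_def by auto
  note BA = brk_all[OF _ _ hb]
  show ?thesis
    apply (intro conjI P1 P2)
    using BR BA by (metis)+
qed


end
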